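(* There is an injective algebra homomorphism $$\Theta:\ \mathsf{H}\longrightarrow \mathbb{C}[y_1^{\pm1},\ldots,y_n^{\pm1}]\#_\alpha G$$ such that, for all $i\in\{1,\ldots,n\}$, $$\Theta(x_i)=y_i-\left(\frac{\zeta t_i}{\zeta-1}\right)y_{i+1}^{-1}g_i,\qquad \Theta(g_i)=g_i$$ (indices modulo $n$, so $y_{n+1}=y_1$).
   Context: Fix integers $n\ge 3$ and $\ell\ge 2$, and let $\zeta$ be a primitive $\ell$-th root of unity. All subscripts are taken modulo $n$ (e.g. $x_{n+1}=x_1$). Let $V=\mathbb{C}^n$ with standard basis $x_1,\ldots,x_n$, and let $G$ be the group of all diagonal matrices $g\in SL_n(\mathbb{C})$ with $g^\ell=1$; $G$ acts on $V$ and hence on the tensor algebra $TV$. For $i=1,\ldots,n$ let $g_i\in G$ be given by $g_i(x_i)=\zeta x_i$, $g_i(x_{i+1})=\zeta^{-1}x_{i+1}$, $g_i(x_j)=x_j$ otherwise; then $g_1,\ldots,g_{n-1}$ freely generate $G\cong(\mathbb{Z}/\ell\mathbb{Z})^{n-1}$ and $g_n=g_1^{-1}\cdots g_{n-1}^{-1}$. Define the 2-cocycle $\alpha$ by $\alpha(g_1^{i_1}\cdots g_{n-1}^{i_{n-1}},g_1^{j_1}\cdots g_{n-1}^{j_{n-1}})=\zeta^{-i_1j_2-i_2j_3-\cdots-i_{n-2}j_{n-1}}$. For an algebra $E$ with $G$-action, $E\#_\alpha G$ is $E\otimes\mathbb{C}G$ with product $(r\otimes g)(s\otimes h)=\alpha(g,h)\,r\,(g\cdot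 s)\otimes gh$; the product of $g,h\in G$ in it is written $g*h=\alpha(g,h)gh$. Let $t=(t_1,\ldots,t_n)\in\mathbb{C}^n$. $\mathsf{H}$ is the quotient of $TV\#_\alpha G$ by the relations $x_ix_{i+1}-x_{i+1}x_i=t_ig_i$ for all $i$, and $x_ix_j-x_jx_i=0$ for all $i,j\in\{1,\ldots,n\}$ with $|i-j|\notin\{1,n-1\}$. The group $G$ acts on the Laurent polynomial algebra $\mathbb{C}[y_1^{\pm1},\ldots,y_n^{\pm1}]$ by $g_i\cdot y_1^{p_1}\cdots y_n^{p_n}=\zeta^{p_i-p_{i+1}}y_1^{p_1}\cdots y_n^{p_n}$ for $i=1,\ldots,n-1$ and $p\in\mathbb{Z}^n$. *)

theory Defs
  imports Complex_Main
begin

text \<open>Indices run over 1..n; succ_idx n n = 1 (subscripts modulo n).\<close>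
definition succ_idx :: "nat \<Rightarrow> nat \<Rightarrow> nat" where
  "succ_idx n i = (if i = n then 1 else i + 1)"

text \<open>A diagonal matrix is represented by its diagonal entries c 1, ..., c n
  (extended by 1 outside 1..n).  G = diagonal matrices in SL_n with g^l = 1.\<close>
definition Gset :: "nat \<Rightarrow> nat \<Rightarrow> (nat \<Rightarrow> complex) set" where
  "Gset n l = {c. (\<forall>i\<in>{1..n}. c i ^ l = 1) \<and> (\<forall>i. i \<notin> {1..n} \<longrightarrow> c i = 1)
                 \<and> (\<Prod>i\<in>{1..n}. c i) = 1}"

definition gmul :: "(nat \<Rightarrow> complex) \<Rightarrow> (nat \<Rightarrow> complex) \<Rightarrow> nat \<Rightarrow> complex" where
  "gmul g h = (\<lambda>i. g i * h i)"

definition gone :: "nat \<Rightarrow> complex" where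
  "gone = (\<lambda>i. 1)"

text \<open>The generator g_k: g_k(x_k) = zeta x_k, g_k(x_(k+1)) = zeta^-1 x_(k+1), identity otherwise.\<close>
definition gen :: "nat \<Rightarrow> complex \<Rightarrow> nat \<Rightarrow> nat \<Rightarrow> complex" where
  "gen n \<zeta> k = (\<lambda>j. if j \<in> {1..n} then
                       (if j = k then \<zeta> else if j = succ_idx n k then inverse \<zeta> else 1)
                     else 1)"

definition gword :: "nat \<Rightarrow> complex \<Rightarrow> (nat \<Rightarrow> nat) \<Rightarrow> nat \<Rightarrow> complex" where
  "gword n \<zeta> e = (\<lambda>j. \<Prod>k\<in>{1..n-1}. (gen n \<zeta> k j) ^ e k)"

definition coords :: "nat \<Rightarrow> nat \<Rightarrow> complex \<Rightarrow> (nat \<Rightarrow> complex) \<Rightarrow> nat \<Rightarrow> nat" where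
  "coords n l \<zeta> g = (THE e. (\<forall>k. e k < l) \<and> (\<forall>k. k \<notin> {1..n-1} \<longrightarrow> e k = 0)
                           \<and> gword n \<zeta> e = g)"

definition alpha :: "nat \<Rightarrow> nat \<Rightarrow> complex \<Rightarrow> (nat \<Rightarrow> complex) \<Rightarrow> (nat \<Rightarrow> complex) \<Rightarrow> complex" where
  "alpha n l \<zeta> g h = \<zeta> powi (- (\<Sum>k\<in>{1..n-2}. int (coords n l \<zeta> g k) * int (coords n l \<zeta> h (k+1))))"

text \<open>Action of g on the word x_(w1) ... x_(wm) of TV (scalar factor).\<close>
definition xact :: "(nat \<Rightarrow> complex) \<Rightarrow> nat list \<Rightarrow> complex" where
  "xact g w = prod_list (map g w)"

text \<open>Action of g = prod g_k^(i_k) on the Laurent monomial y^p (scalar factor):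
  each g_k multiplies y^p by zeta^(p_k - p_(k+1)).\<close>
definition yact :: "nat \<Rightarrow> nat \<Rightarrow> complex \<Rightarrow> (nat \<Rightarrow> complex) \<Rightarrow> (nat \<Rightarrow> int) \<Rightarrow> complex" where
  "yact n l \<zeta> g p = \<zeta> powi (\<Sum>k\<in>{1..n-1}. int (coords n l \<zeta> g k) * (p k - p (k+1)))"

definition tw_mult :: "('b \<Rightarrow> 'b \<Rightarrow> 'b) \<Rightarrow> ('b \<Rightarrow> 'b \<Rightarrow> complex)
                       \<Rightarrow> ('b \<Rightarrow> complex) \<Rightarrow> ('b \<Rightarrow> complex) \<Rightarrow> 'b \<Rightarrow> complex" where
  "tw_mult comb coef F H = (\<lambda>c. \<Sum>(a,b)\<in>{(a,b). F a \<noteq> 0 \<and> H b \<noteq> 0 \<and> comb a b = c}.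
                                     F a * H b * coef a b)"

definition basis_el :: "'b \<Rightarrow> 'b \<Rightarrow> complex" where
  "basis_el b = (\<lambda>c. if c = b then 1 else 0)"

definition fin_supp_on :: "'b set \<Rightarrow> ('b \<Rightarrow> complex) set" where
  "fin_supp_on B = {F. finite {b. F b \<noteq> 0} \<and> {b. F b \<noteq> 0} \<subseteq> B}"

subsection \<open>The algebra TV #_alpha G (basis: word in x_1..x_n tensor group element)\<close>

definition Sbasis :: "nat \<Rightarrow> nat \<Rightarrow> (nat list \<times> (nat \<Rightarrow> complex)) set" where
  "Sbasis n l = {(w, g). set w \<subseteq> {1..n} \<and> g \<in> Gset n l}"

definition Salg :: "nat \<Rightarrow> nat \<Rightarrow> (nat list \<times> (nat \<Rightarrow> complex) \<Rightarrow> complex) set" where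
  "Salg n l = fin_supp_on (Sbasis n l)"

definition smul :: "nat \<Rightarrow> nat \<Rightarrow> complex \<Rightarrow> (nat list \<times> (nat \<Rightarrow> complex) \<Rightarrow> complex)
                    \<Rightarrow> (nat list \<times> (nat \<Rightarrow> complex) \<Rightarrow> complex) \<Rightarrow> nat list \<times> (nat \<Rightarrow> complex) \<Rightarrow> complex" where
  "smul n l \<zeta> = tw_mult (\<lambda>(w, g) (w', h). (w @ w', gmul g h))
                        (\<lambda>(w, g) (w', h). alpha n l \<zeta> g h * xact g w')"

definition sx :: "nat \<Rightarrow> nat list \<times> (nat \<Rightarrow> complex) \<Rightarrow> complex" where
  "sx i = basis_el ([i], gone)"

definition sg :: "(nat \<Rightarrow> complex) \<Rightarrow> nat list \<times> (nat \<Rightarrow> complex) \<Rightarrow> complex" where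
  "sg g = basis_el ([], g)"

definition sone :: "nat list \<times> (nat \<Rightarrow> complex) \<Rightarrow> complex" where
  "sone = basis_el ([], gone)"

subsection \<open>The algebra C[y^(+-1)] #_alpha G (basis: Laurent monomial y^p tensor group element)\<close>

definition Tbasis :: "nat \<Rightarrow> nat \<Rightarrow> ((nat \<Rightarrow> int) \<times> (nat \<Rightarrow> complex)) set" where
  "Tbasis n l = {(p, g). (\<forall>i. i \<notin> {1..n} \<longrightarrow> p i = 0) \<and> g \<in> Gset n l}"

definition Talg :: "nat \<Rightarrow> nat \<Rightarrow> ((nat \<Rightarrow> int) \<times> (nat \<Rightarrow> complex) \<Rightarrow> complex) set" where
  "Talg n l = fin_supp_on (Tbasis n l)"

definition tmul :: "nat \<Rightarrow> nat \<Rightarrow> complex \<Rightarrow> ((nat \<Rightarrow> int) \<times> (nat \<Rightarrow> complex) \<Rightarrow> complex)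
                    \<Rightarrow> ((nat \<Rightarrow> int) \<times> (nat \<Rightarrow> complex) \<Rightarrow> complex) \<Rightarrow> (nat \<Rightarrow> int) \<times> (nat \<Rightarrow> complex) \<Rightarrow> complex" where
  "tmul n l \<zeta> = tw_mult (\<lambda>(p, g) (p', h). (\<lambda>i. p i + p' i, gmul g h))
                        (\<lambda>(p, g) (p', h). alpha n l \<zeta> g h * yact n l \<zeta> g p')"

definition ymon :: "(nat \<Rightarrow> int) \<Rightarrow> (nat \<Rightarrow> int) \<times> (nat \<Rightarrow> complex) \<Rightarrow> complex" where
  "ymon p = basis_el (p, gone)"

definition ty :: "nat \<Rightarrow> (nat \<Rightarrow> int) \<times> (nat \<Rightarrow> complex) \<Rightarrow> complex" where
  "ty i = ymon (\<lambda>j. if j = i then 1 else 0)"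

definition tyinv :: "nat \<Rightarrow> (nat \<Rightarrow> int) \<times> (nat \<Rightarrow> complex) \<Rightarrow> complex" where
  "tyinv i = ymon (\<lambda>j. if j = i then -1 else 0)"

definition tg :: "(nat \<Rightarrow> complex) \<Rightarrow> (nat \<Rightarrow> int) \<times> (nat \<Rightarrow> complex) \<Rightarrow> complex" where
  "tg g = basis_el (\<lambda>_. 0, g)"

definition tone :: "(nat \<Rightarrow> int) \<times> (nat \<Rightarrow> complex) \<Rightarrow> complex" where
  "tone = basis_el (\<lambda>_. 0, gone)"

definition fdiff :: "('b \<Rightarrow> complex) \<Rightarrow> ('b \<Rightarrow> complex) \<Rightarrow> 'b \<Rightarrow> complex" where
  "fdiff F H = (\<lambda>b. F b - H b)"

definition ideal_gen :: "(('b \<Rightarrow> complex) \<Rightarrow> ('b \<Rightarrow> complex) \<Rightarrow> 'b \<Rightarrow> complex)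
                          \<Rightarrow> ('b \<Rightarrow> complex) set \<Rightarrow> ('b \<Rightarrow> complex) set \<Rightarrow> ('b \<Rightarrow> complex) set" where
  "ideal_gen mult A R = \<Inter>{J. R \<subseteq> J \<and> J \<subseteq> A \<and> (\<lambda>_. 0) \<in> J
      \<and> (\<forall>a\<in>J. \<forall>b\<in>J. (\<lambda>x. a x + b x) \<in> J)
      \<and> (\<forall>c. \<forall>a\<in>J. (\<lambda>x. c * a x) \<in> J)
      \<and> (\<forall>a\<in>A. \<forall>j\<in>J. mult a j \<in> J \<and> mult j a \<in> J)}"

definition idx_dist :: "nat \<Rightarrow> nat \<Rightarrow> nat" where
  "idx_dist i j = (if j \<le> i then i - j else j - i)"

definition Hrels :: "nat \<Rightarrow> nat \<Rightarrow> complex \<Rightarrow> (nat \<Rightarrow> complex)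
                     \<Rightarrow> (nat list \<times> (nat \<Rightarrow> complex) \<Rightarrow> complex) set" where
  "Hrels n l \<zeta> t =
     {fdiff (fdiff (smul n l \<zeta> (sx i) (sx (succ_idx n i))) (smul n l \<zeta> (sx (succ_idx n i)) (sx i)))
            (\<lambda>b. t i * sg (gen n \<zeta> i) b) | i. i \<in> {1..n}}
   \<union> {fdiff (smul n l \<zeta> (sx i) (sx j)) (smul n l \<zeta> (sx j) (sx i)) | i j.
        i \<in> {1..n} \<and> j \<in> {1..n} \<and> idx_dist i j \<notin> {1, n - 1}}"

text \<open>H = Salg / Hideal.\<close>
definition Hideal :: "nat \<Rightarrow> nat \<Rightarrow> complex \<Rightarrow> (nat \<Rightarrow> complex)
                      \<Rightarrow> (nat list \<times> (nat \<Rightarrow> complex) \<Rightarrow> complex) set" where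
  "Hideal n l \<zeta> t = ideal_gen (smul n l \<zeta>) (Salg n l) (Hrels n l \<zeta> t)"

end

theory Submission
  imports Defs "HOL-Number_Theory.Cong" "HOL-Library.Multiset"
begin


definition supp :: "('b \<Rightarrow> complex) \<Rightarrow> 'b set" where "supp F = {b. F b \<noteq> 0}"

lemma tw_sum:
  assumes "finite A" "finite B" "supp F \<subseteq> A" "supp H \<subseteq> B"
  shows "tw_mult comb coef F H c = (\<Sum>a\<in>A. \<Sum>b\<in>B. of_bool (comb a b = c) * (F a * H b * coef a b))"
proof -
  have "tw_mult comb coef F H c = (\<Sum>(a,b)\<in>{(a,b). F a \<noteq> 0 \<and> H b \<noteq> 0 \<and> comb a b = c}. F a * H b * coef a b)"
    by (simp add: tw_mult_def)
  also have "\<dots> = (\<Sum>(a,b)\<in>A\<times>B. of_bool (comb a b = c) * (F a * H b * coef a b))"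
    apply (rule sum.mono_neutral_cong_left)
    using assms by (auto simp: supp_def)
  also have "\<dots> = (\<Sum>a\<in>A. \<Sum>b\<in>B. of_bool (comb a b = c) * (F a * H b * coef a b))"
    by (simp add: sum.cartesian_product)
  finally show ?thesis .
qed

lemma tw_supp:
  "supp (tw_mult comb coef F H) \<subseteq> (\<lambda>(a,b). comb a b) ` (supp F \<times> supp H)"
proof
  fix c assume c: "c \<in> supp (tw_mult comb coef F H)"
  have "{(a,b). F a \<noteq> 0 \<and> H b \<noteq> 0 \<and> comb a b = c} \<noteq> {}"
  proof
    assume "{(a,b). F a \<noteq> 0 \<and> H b \<noteq> 0 \<and> comb a b = c} = {}"
    then have "tw_mult comb coef F H c = 0" by (simp only: tw_mult_def sum.empty)
    with c show False by (simp add: supp_def)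
  qed
  then show "c \<in> (\<lambda>(a,b). comb a b) ` (supp F \<times> supp H)"
    by (force simp: supp_def)
qed

lemma tw_nz:
  "tw_mult comb coef F H c \<noteq> 0 \<Longrightarrow> \<exists>a b. F a \<noteq> 0 \<and> H b \<noteq> 0 \<and> comb a b = c"
  using tw_supp[of comb coef F H] by (force simp: supp_def)

lemma tw_fin:
  "finite (supp F) \<Longrightarrow> finite (supp H) \<Longrightarrow> finite (supp (tw_mult comb coef F H))"
  by (rule finite_subset[OF tw_supp]) auto

lemma tw_sum_left:
  assumes "finite I" "\<And>i. i \<in> I \<Longrightarrow> finite (supp (f i))" "finite (supp H)"
  shows "tw_mult comb coef (\<lambda>z. \<Sum>i\<in>I. f i z) H c = (\<Sum>i\<in>I. tw_mult comb coef (f i) H c)"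
proof -
  let ?U = "\<Union>i\<in>I. supp (f i)"
  have fU: "finite ?U" using assms by auto
  have sU: "supp (\<lambda>z. \<Sum>i\<in>I. f i z) \<subseteq> ?U"
    by (auto simp: supp_def intro: ccontr)
  have "tw_mult comb coef (\<lambda>z. \<Sum>i\<in>I. f i z) H c
     = (\<Sum>a\<in>?U. \<Sum>b\<in>supp H. of_bool (comb a b = c) * ((\<Sum>i\<in>I. f i a) * H b * coef a b))"
    by (rule tw_sum[OF fU assms(3) sU]) auto
  also have "\<dots> = (\<Sum>i\<in>I. \<Sum>a\<in>?U. \<Sum>b\<in>supp H. of_bool (comb a b = c) * (f i a * H b * coef a b))"
    by (simp add: sum_distrib_left sum_distrib_right sum.swap[of _ I] mult_ac)
  also have "\<dots> = (\<Sum>i\<in>I. tw_mult comb coef (f i) H c)"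
    apply (rule sum.cong[OF refl])
    apply (rule tw_sum[symmetric])
    using assms fU by auto
  finally show ?thesis .
qed

lemma tw_sum_right:
  assumes "finite I" "\<And>i. i \<in> I \<Longrightarrow> finite (supp (f i))" "finite (supp F)"
  shows "tw_mult comb coef F (\<lambda>z. \<Sum>i\<in>I. f i z) c = (\<Sum>i\<in>I. tw_mult comb coef F (f i) c)"
proof -
  let ?U = "\<Union>i\<in>I. supp (f i)"
  have fU: "finite ?U" using assms by auto
  have sU: "supp (\<lambda>z. \<Sum>i\<in>I. f i z) \<subseteq> ?U"
    by (auto simp: supp_def intro: ccontr)
  have "tw_mult comb coef F (\<lambda>z. \<Sum>i\<in>I. f i z) c
     = (\<Sum>a\<in>supp F. \<Sum>b\<in>?U. of_bool (comb a b = c) * (F a * (\<Sum>i\<in>I. f i b) * coef a b))"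
    by (rule tw_sum[OF assms(3) fU _ sU]) auto
  also have "\<dots> = (\<Sum>i\<in>I. \<Sum>a\<in>supp F. \<Sum>b\<in>?U. of_bool (comb a b = c) * (F a * f i b * coef a b))"
    by (simp add: sum_distrib_left sum_distrib_right sum.swap[of _ I] mult_ac)
  also have "\<dots> = (\<Sum>i\<in>I. tw_mult comb coef F (f i) c)"
    apply (rule sum.cong[OF refl])
    apply (rule tw_sum[symmetric])
    using assms fU by auto
  finally show ?thesis .
qed

lemma tw_lin_left:
  assumes "finite (supp F)" "finite (supp G)" "finite (supp H)"
  shows "tw_mult comb coef (\<lambda>z. a * F z + b * G z) H c = a * tw_mult comb coef F H c + b * tw_mult comb coef G H c"
proof -
  have sU: "supp (\<lambda>z. a * F z + b * G z) \<subseteq> supp F \<union> supp G" by (auto simp: supp_def)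
  have fU: "finite (supp F \<union> supp G)" using assms by auto
  show ?thesis
    apply (subst tw_sum[OF fU assms(3) sU subset_refl])
    apply (subst tw_sum[OF fU assms(3) _ subset_refl], force)
    apply (subst tw_sum[OF fU assms(3) _ subset_refl], force)
    by (simp add: sum_distrib_left sum.distrib algebra_simps)
qed

lemma tw_lin_right:
  assumes "finite (supp F)" "finite (supp G)" "finite (supp H)"
  shows "tw_mult comb coef H (\<lambda>z. a * F z + b * G z) c = a * tw_mult comb coef H F c + b * tw_mult comb coef H G c"
proof -
  have sU: "supp (\<lambda>z. a * F z + b * G z) \<subseteq> supp F \<union> supp G" by (auto simp: supp_def)
  have fU: "finite (supp F \<union> supp G)" using assms by auto
  show ?thesis
    apply (subst tw_sum[OF assms(3) fU subset_refl sU])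
    apply (subst tw_sum[OF assms(3) fU subset_refl], force)
    apply (subst tw_sum[OF assms(3) fU subset_refl], force)
    by (simp add: sum_distrib_left sum.distrib algebra_simps)
qed

lemma tw_basis:
  "tw_mult comb coef (basis_el a) (basis_el b) c = coef a b * basis_el (comb a b) c"
proof -
  have "tw_mult comb coef (basis_el a) (basis_el b) c
        = (\<Sum>x\<in>{a}. \<Sum>y\<in>{b}. of_bool (comb x y = c) * (basis_el a x * basis_el b y * coef x y))"
    by (rule tw_sum) (auto simp: supp_def basis_el_def)
  then show ?thesis by (simp add: basis_el_def)
qed

lemma tw_zero_left: "tw_mult comb coef (\<lambda>_. 0) H c = 0"
  by (simp add: tw_mult_def)
lemma tw_zero_right: "tw_mult comb coef H (\<lambda>_. 0) c = 0"
  by (simp add: tw_mult_def)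

lemma collapse:
  fixes f :: "'u \<Rightarrow> complex" and g :: "'a \<Rightarrow> 'b \<Rightarrow> complex"
  assumes "finite A" "finite B" "finite U" "\<And>a b. a \<in> A \<Longrightarrow> b \<in> B \<Longrightarrow> h a b \<in> U"
  shows "(\<Sum>u\<in>U. f u * (\<Sum>a\<in>A. \<Sum>b\<in>B. of_bool (h a b = u) * g a b)) = (\<Sum>a\<in>A. \<Sum>b\<in>B. f (h a b) * g a b)"
proof -
  have "(\<Sum>u\<in>U. f u * (\<Sum>a\<in>A. \<Sum>b\<in>B. of_bool (h a b = u) * g a b))
      = (\<Sum>u\<in>U. \<Sum>a\<in>A. \<Sum>b\<in>B. of_bool (h a b = u) * (f u * g a b))"
    unfolding sum_distrib_left by (simp add: mult.left_commute)
  also have "\<dots> = (\<Sum>a\<in>A. \<Sum>u\<in>U. \<Sum>b\<in>B. of_bool (h a b = u) * (f u * g a b))"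
    by (rule sum.swap)
  also have "\<dots> = (\<Sum>a\<in>A. \<Sum>b\<in>B. \<Sum>u\<in>U. of_bool (h a b = u) * (f u * g a b))"
    by (rule sum.cong[OF refl], rule sum.swap)
  also have "\<dots> = (\<Sum>a\<in>A. \<Sum>b\<in>B. f (h a b) * g a b)"
    using assms by (auto intro!: sum.cong simp: of_bool_def sum.delta' if_distrib[where f="\<lambda>x. x * _"] cong: if_cong)
  finally show ?thesis .
qed

lemma tw_assoc:
  assumes fF: "finite (supp F)" and fH: "finite (supp H)" and fK: "finite (supp K)"
    and ass: "\<And>a b c. a \<in> supp F \<Longrightarrow> b \<in> supp H \<Longrightarrow> c \<in> supp K \<Longrightarrow>
         comb (comb a b) c = comb a (comb b c) \<and> coef a b * coef (comb a b) c = coef b c * coef a (comb b c)"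
  shows "tw_mult comb coef (tw_mult comb coef F H) K d = tw_mult comb coef F (tw_mult comb coef H K) d"
proof -
  let ?A = "supp F" and ?B = "supp H" and ?C = "supp K"
  let ?U = "(\<lambda>(a,b). comb a b) ` (?A \<times> ?B)" and ?V = "(\<lambda>(a,b). comb a b) ` (?B \<times> ?C)"
  have fU: "finite ?U" "finite ?V" using assms by auto
  have "tw_mult comb coef (tw_mult comb coef F H) K d
    = (\<Sum>u\<in>?U. \<Sum>k\<in>?C. of_bool (comb u k = d) * (tw_mult comb coef F H u * K k * coef u k))"
    by (rule tw_sum[OF fU(1) fK tw_supp subset_refl])
  also have "\<dots> = (\<Sum>k\<in>?C. \<Sum>u\<in>?U. (of_bool (comb u k = d) * K k * coef u k) * tw_mult comb coef F H u)"
    by (subst sum.swap) (simp add: mult_ac)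
  also have "\<dots> = (\<Sum>k\<in>?C. \<Sum>a\<in>?A. \<Sum>b\<in>?B. (of_bool (comb (comb a b) k = d) * K k * coef (comb a b) k) * (F a * H b * coef a b))"
    apply (rule sum.cong[OF refl])
    apply (subst tw_sum[OF fF fH subset_refl subset_refl])
    by (rule collapse) (use fU fF fH in auto)
  also have "\<dots> = (\<Sum>a\<in>?A. \<Sum>k\<in>?C. \<Sum>b\<in>?B. (of_bool (comb (comb a b) k = d) * K k * coef (comb a b) k) * (F a * H b * coef a b))"
    by (rule sum.swap)
  also have "\<dots> = (\<Sum>a\<in>?A. \<Sum>b\<in>?B. \<Sum>k\<in>?C. (of_bool (comb (comb a b) k = d) * K k * coef (comb a b) k) * (F a * H b * coef a b))"
    by (rule sum.cong[OF refl], rule sum.swap)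
  also have "\<dots> = (\<Sum>a\<in>?A. \<Sum>b\<in>?B. \<Sum>k\<in>?C. (of_bool (comb a (comb b k) = d) * F a * coef a (comb b k)) * (H b * K k * coef b k))"
    apply (intro sum.cong refl)
    subgoal for a b k using ass[of a b k] by (simp add: mult_ac)
    done
  also have "\<dots> = (\<Sum>a\<in>?A. \<Sum>v\<in>?V. (of_bool (comb a v = d) * F a * coef a v) * tw_mult comb coef H K v)"
    apply (rule sum.cong[OF refl])
    apply (subst tw_sum[OF fH fK subset_refl subset_refl])
    by (rule collapse[symmetric]) (use fU fK fH in auto)
  also have "\<dots> = (\<Sum>a\<in>?A. \<Sum>v\<in>?V. of_bool (comb a v = d) * (F a * tw_mult comb coef H K v * coef a v))"
    by (simp add: mult_ac)
  also have "\<dots> = tw_mult comb coef F (tw_mult comb coef H K) d"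
    by (rule tw_sum[OF fF fU(2) subset_refl tw_supp, symmetric])
  finally show ?thesis .
qed




locale PS =
  fixes n l :: nat and z :: complex
  assumes n3: "n \<ge> 3" and l2: "l \<ge> 2" and zl: "z ^ l = 1"
    and prim: "\<forall>k. 0 < k \<and> k < l \<longrightarrow> z ^ k \<noteq> 1"
begin

lemma z_nz: "z \<noteq> 0"
proof
  assume "z = 0" then have "z ^ l = 0" using l2 by simp
  with zl show False by simp
qed

lemma zpow_mod: "z ^ (m mod l) = z ^ m"
proof -
  have "m = l * (m div l) + m mod l" by simp
  then have "z ^ m = (z ^ l) ^ (m div l) * z ^ (m mod l)" by (metis power_add power_mult)
  then show ?thesis using zl by simp
qed

lemma zpow_inj: assumes "a < l" "b < l" "z ^ a = z ^ b" shows "a = b"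
proof (rule ccontr)
  assume ne: "a \<noteq> b"
  { fix a b :: nat assume ab: "a < b" "b < l" "z ^ a = z ^ b"
    have "z ^ b = z ^ a * z ^ (b - a)" using ab by (metis le_add_diff_inverse less_imp_le power_add)
    then have "z ^ (b - a) = 1" using ab z_nz by simp
    with prim ab have False by force }
  from this[of a b] this[of b a] assms ne show False by (metis linorder_neqE_nat)
qed

lemma zpowi_nat: "z powi a = z ^ nat (a mod int l)"
proof -
  have l0: "int l > 0" using l2 by simp
  have "a = int l * (a div int l) + a mod int l" by simp
  then have "z powi a = z powi (int l * (a div int l)) * z powi (a mod int l)"
    by (metis power_int_add z_nz)
  also have "z powi (int l * (a div int l)) = 1"
    by (simp add: power_int_mult zl)
  also have "a mod int l = int (nat (a mod int l))" using l0 by simp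
  finally show ?thesis by (metis mult_1 power_int_of_nat)
qed

lemma zpowi_eq: "z powi a = z powi b \<longleftrightarrow> [a = b] (mod int l)"
proof
  have l0: "int l > 0" using l2 by simp
  assume "z powi a = z powi b"
  then have "z ^ nat (a mod int l) = z ^ nat (b mod int l)" by (simp add: zpowi_nat)
  then have "nat (a mod int l) = nat (b mod int l)"
    by (rule zpow_inj[rotated 2]) (use l0 in \<open>simp_all add: nat_less_iff\<close>)
  moreover have "a mod int l \<ge> 0" "b mod int l \<ge> 0" using l0 by auto
  ultimately show "[a = b] (mod int l)" unfolding cong_def by (metis nat_eq_iff2)
next
  assume "[a = b] (mod int l)"
  then show "z powi a = z powi b" by (simp add: zpowi_nat cong_def)
qed

lemma zpowi_add: "z powi a * z powi b = z powi (a + b)"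
  by (simp add: power_int_add z_nz)

lemma zpowi_inv: "inverse (z powi a) = z powi (- a)"
  by (simp add: power_int_minus)

lemma root_pow: assumes "c ^ l = 1" shows "\<exists>m<l. c = z ^ m"
proof -
  have l0: "l > 0" using l2 by simp
  have "(z ^ m) ^ l = 1" for m by (metis power_mult mult.commute power_one zl)
  then have sub: "(\<lambda>m. z ^ m) ` {..<l} \<subseteq> {c. c ^ l = 1}" by auto
  have inj: "inj_on (\<lambda>m. z ^ m) {..<l}" by (auto intro!: inj_onI zpow_inj)
  have "card ((\<lambda>m. z ^ m) ` {..<l}) = card {c::complex. c ^ l = 1}"
    using card_image[OF inj] card_roots_unity_eq[OF l0] by simp
  then have "(\<lambda>m. z ^ m) ` {..<l} = {c. c ^ l = 1}"
    by (intro card_subset_eq sub finite_roots_unity) (use l0 in auto)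
  with assms show ?thesis by auto
qed

abbreviation G where "G \<equiv> Gset n l"

lemma succ_in: "j \<in> {1..n} \<Longrightarrow> succ_idx n j \<in> {1..n}"
  using n3 by (auto simp: succ_idx_def)
lemma succ_ne: "j \<in> {1..n} \<Longrightarrow> succ_idx n j \<noteq> j"
  using n3 by (auto simp: succ_idx_def)
lemma succ_inj: "i \<in> {1..n} \<Longrightarrow> j \<in> {1..n} \<Longrightarrow> succ_idx n i = succ_idx n j \<Longrightarrow> i = j"
  unfolding succ_idx_def by (cases "i = n"; cases "j = n") auto
lemma succ_lt: "j < n \<Longrightarrow> succ_idx n j = j + 1"
  by (simp add: succ_idx_def)

lemma gword_out: assumes "j \<notin> {1..n}" shows "gword n z e j = 1"
proof -
  have "gen n z k j = 1" for k unfolding gen_def by (rule if_not_P[OF assms])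
  then show ?thesis unfolding gword_def by simp
qed

lemma gen_lt: assumes "k \<in> {1..n-1}" "j \<in> {1..n}"
  shows "gen n z k j = (if j = k then z else if j = k + 1 then inverse z else 1)"
proof -
  have "k \<noteq> n" using assms n3 by auto
  then have "succ_idx n k = k + 1" by (simp add: succ_idx_def)
  then show ?thesis using assms unfolding gen_def by simp
qed

lemma gword_in:
  assumes j: "j \<in> {1..n}"
  shows "gword n z e j = (if j \<in> {1..n-1} then z ^ e j else 1) * (if j - 1 \<in> {1..n-1} then inverse z ^ e (j - 1) else 1)"
proof -
  have "gen n z k j ^ e k = (if k = j then z ^ e k else 1) * (if k = j - 1 then inverse z ^ e k else 1)"
    if k: "k \<in> {1..n-1}" for k
  proof -
    have "gen n z k j = (if j = k then z else if j = k + 1 then inverse z else 1)"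
      using gen_lt[OF k j] .
    moreover have "k = j - 1 \<longleftrightarrow> j = k + 1" using j k by auto
    ultimately show ?thesis by auto
  qed
  then have "gword n z e j = (\<Prod>k\<in>{1..n-1}. (if k = j then z ^ e k else 1) * (if k = j - 1 then inverse z ^ e k else 1))"
    unfolding gword_def by (rule prod.cong[OF refl])
  also have "\<dots> = (if j \<in> {1..n-1} then z ^ e j else 1) * (if j - 1 \<in> {1..n-1} then inverse z ^ e (j - 1) else 1)"
    by (simp only: prod.distrib prod.delta finite_atLeastAtMost)
  finally show ?thesis .
qed

lemma gword_prefix:
  assumes e0: "\<forall>k. k \<notin> {1..n-1} \<longrightarrow> e k = 0"
  shows "k \<le> n - 1 \<Longrightarrow> (\<Prod>j\<in>{1..k}. gword n z e j) = z ^ e k"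
proof (induction k)
  case 0 then show ?case using e0 by simp
next
  case (Suc k)
  have ek: "(if k \<in> {1..n-1} then inverse z ^ e k else 1) = inverse z ^ e k"
    using e0 by auto
  have sk: "Suc k \<in> {1..n}" "Suc k \<in> {1..n-1}" using Suc.prems by auto
  have "gword n z e (Suc k) = (if Suc k \<in> {1..n-1} then z ^ e (Suc k) else 1) * (if k \<in> {1..n-1} then inverse z ^ e k else 1)"
    using gword_in[OF sk(1), of e] by (simp only: diff_Suc_1)
  then have gs: "gword n z e (Suc k) = z ^ e (Suc k) * inverse z ^ e k"
    by (simp only: if_P[OF sk(2)] ek)
  have "(\<Prod>j\<in>{1..Suc k}. gword n z e j) = (\<Prod>j\<in>{1..k}. gword n z e j) * gword n z e (Suc k)"
    by (subst prod.cl_ivl_Suc) simp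
  also have "\<dots> = z ^ e k * (z ^ e (Suc k) * inverse (z ^ e k))"
    using Suc gs by (simp add: power_inverse)
  also have "\<dots> = z ^ e (Suc k)" using z_nz by simp
  finally show ?case .
qed

lemma gword_exists:
  assumes g: "g \<in> G"
  shows "\<exists>e. (\<forall>k. e k < l) \<and> (\<forall>k. k \<notin> {1..n-1} \<longrightarrow> e k = 0) \<and> gword n z e = g"
proof -
  have l0: "l > 0" using l2 by simp
  define m where "m j = (SOME m. m < l \<and> g j = z ^ m)" for j
  have m: "m j < l \<and> g j = z ^ m j" if "j \<in> {1..n}" for j
  proof -
    have "g j ^ l = 1" using g that unfolding Gset_def by blast
    from root_pow[OF this] show ?thesis unfolding m_def by (rule someI_ex)
  qed
  define P where "P k = (\<Sum>j\<in>{1..k}. m j)" for k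
  define e where "e k = (if k \<in> {1..n-1} then P k mod l else 0)" for k
  have ze: "z ^ e k = z ^ P k" if "k \<le> n - 1" for k
  proof (cases "k = 0")
    case True then show ?thesis by (simp add: e_def P_def)
  next
    case False then have "k \<in> {1..n-1}" using that by auto
    then show ?thesis by (simp add: e_def zpow_mod)
  qed
  have P_suc: "P (Suc k) = P k + m (Suc k)" for k by (simp add: P_def)
  have prodg: "(\<Prod>j\<in>{1..k}. g j) = z ^ P k" if "k \<le> n" for k
  proof -
    have "(\<Prod>j\<in>{1..k}. g j) = (\<Prod>j\<in>{1..k}. z ^ m j)"
      by (rule prod.cong) (use m that in auto)
    then show ?thesis by (simp add: P_def power_sum)
  qed
  have e_in: "(if k \<in> {1..n-1} then z ^ e k else 1) = z ^ e k"
      "(if k \<in> {1..n-1} then inverse z ^ e k else 1) = inverse z ^ e k" for k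
    by (auto simp: e_def)
  have "gword n z e j = g j" for j
  proof (cases "j \<in> {1..n}")
    case False then show ?thesis using g by (simp add: gword_out Gset_def)
  next
    case True
    have gi: "gword n z e j = z ^ e j * inverse (z ^ e (j - 1))"
      using gword_in[OF True, of e] by (simp only: e_in flip: power_inverse)
    show ?thesis
    proof (cases "j = n")
      case True
      have "z ^ P n = 1" using prodg[of n] g by (simp add: Gset_def)
      moreover have sn: "Suc (n - 1) = n" using n3 by simp
      moreover have "P n = P (n - 1) + m n" using P_suc[of "n-1"] sn by simp
      ultimately have "z ^ P (n - 1) * z ^ m n = 1" by (simp add: power_add)
      moreover have "g n = z ^ m n" using m[of n] n3 by simp
      ultimately have gn: "g n = inverse (z ^ P (n-1))" by (metis inverse_unique)
      have en: "e n = 0" using n3 by (simp add: e_def)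
      show ?thesis using gi True ze[of "n-1"] gn en by simp
    next
      case False
      with \<open>j \<in> {1..n}\<close> have jn: "j \<le> n - 1" "j \<ge> 1" by auto
      have sj: "Suc (j - 1) = j" using jn by simp
      have "P j = P (j - 1) + m j" using P_suc[of "j-1"] sj by simp
      then have "z ^ P j = z ^ P (j-1) * g j" using m[of j] jn by (simp add: power_add)
      moreover have "z ^ P (j-1) \<noteq> 0" using z_nz by simp
      ultimately have "g j = z ^ P j / z ^ P (j-1)" by simp
      then have "g j = z ^ P j * inverse (z ^ P (j-1))" by (simp add: divide_inverse)
      then show ?thesis using gi ze[of j] ze[of "j-1"] jn by simp
    qed
  qed
  then have "gword n z e = g" by auto
  moreover have "\<forall>k. e k < l" using l0 by (simp add: e_def)
  moreover have "\<forall>k. k \<notin> {1..n-1} \<longrightarrow> e k = 0" by (simp add: e_def)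
  ultimately show ?thesis by blast
qed

lemma gword_unique:
  assumes "\<forall>k. e k < l" "\<forall>k. k \<notin> {1..n-1} \<longrightarrow> e k = 0" "gword n z e = g"
    and "\<forall>k. e' k < l" "\<forall>k. k \<notin> {1..n-1} \<longrightarrow> e' k = 0" "gword n z e' = g"
  shows "e = e'"
proof
  fix k show "e k = e' k"
  proof (cases "k \<in> {1..n-1}")
    case True
    then have "z ^ e k = z ^ e' k"
      using gword_prefix[of e k] gword_prefix[of e' k] assms by auto
    then show ?thesis using assms zpow_inj by blast
  next
    case False then show ?thesis using assms by auto
  qed
qed

lemma coords_spec:
  assumes "g \<in> G"
  shows "(\<forall>k. coords n l z g k < l) \<and> (\<forall>k. k \<notin> {1..n-1} \<longrightarrow> coords n l z g k = 0)
         \<and> gword n z (coords n l z g) = g"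
proof -
  obtain e where e: "(\<forall>k. e k < l) \<and> (\<forall>k. k \<notin> {1..n-1} \<longrightarrow> e k = 0) \<and> gword n z e = g"
    using gword_exists[OF assms] by blast
  show ?thesis unfolding coords_def
    apply (rule theI[of _ e])
    using e apply blast
    using e gword_unique by blast
qed

lemma coords_lt: "g \<in> G \<Longrightarrow> coords n l z g k < l" using coords_spec by blast
lemma coords_out: "g \<in> G \<Longrightarrow> k \<notin> {1..n-1} \<Longrightarrow> coords n l z g k = 0" using coords_spec by blast
lemma coords_0: "g \<in> G \<Longrightarrow> coords n l z g 0 = 0" using coords_out by auto
lemma coords_n: "g \<in> G \<Longrightarrow> coords n l z g n = 0" using coords_out n3 by auto

lemma G_prod: "g \<in> G \<Longrightarrow> (\<Prod>j\<in>{1..n}. g j) = 1" unfolding Gset_def by blast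
lemma G_out: "g \<in> G \<Longrightarrow> j \<notin> {1..n} \<Longrightarrow> g j = 1" unfolding Gset_def by blast
lemma G_pow: "g \<in> G \<Longrightarrow> g j ^ l = 1" unfolding Gset_def by (cases "j \<in> {1..n}") auto
lemma G_nz: assumes "g \<in> G" shows "g j \<noteq> 0"
proof
  assume "g j = 0" then have "g j ^ l = 0" using l2 by simp
  with G_pow[OF assms, of j] show False by simp
qed

lemma pref:
  assumes g: "g \<in> G" and k: "k \<le> n"
  shows "(\<Prod>j\<in>{1..k}. g j) = z ^ coords n l z g k"
proof (cases "k = n")
  case True then show ?thesis using G_prod[OF g] coords_n[OF g] by simp
next
  case False
  then show ?thesis using gword_prefix[of "coords n l z g" k] coords_spec[OF g] k by auto
qed

abbreviation cz where "cz g k \<equiv> int (coords n l z g k)"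

lemma G_val:
  assumes g: "g \<in> G" and j: "j \<in> {1..n}"
  shows "g j = z powi (cz g j - cz g (j - 1))"
proof -
  have jj: "j = Suc (j - 1)" using j by auto
  have "(\<Prod>i\<in>{1..j}. g i) = (\<Prod>i\<in>{1..j-1}. g i) * g j"
    by (subst jj, subst prod.cl_ivl_Suc) (use j in auto)
  moreover have "(\<Prod>i\<in>{1..j-1}. g i) = z ^ coords n l z g (j - 1)" by (rule pref[OF g]) (use j in auto)
  moreover have "(\<Prod>i\<in>{1..j}. g i) = z ^ coords n l z g j" by (rule pref[OF g]) (use j in auto)
  ultimately have "z ^ coords n l z g j = z ^ coords n l z g (j - 1) * g j" by simp
  then show ?thesis using z_nz by (simp add: power_int_diff field_simps)
qed


lemma gmul_G: assumes "g \<in> G" "h \<in> G" shows "gmul g h \<in> G"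
proof -
  have "(g i * h i) ^ l = 1" for i using G_pow[OF assms(1), of i] G_pow[OF assms(2), of i]
    by (simp add: power_mult_distrib)
  moreover have "i \<notin> {1..n} \<Longrightarrow> g i * h i = 1" for i using G_out[OF assms(1)] G_out[OF assms(2)] by simp
  moreover have "(\<Prod>i\<in>{1..n}. g i * h i) = 1" using G_prod assms by (simp add: prod.distrib)
  ultimately show ?thesis unfolding Gset_def gmul_def by blast
qed

lemma gone_G: "gone \<in> G"
  unfolding Gset_def gone_def by simp

lemma gmul_comm: "gmul g h = gmul h g" by (auto simp: gmul_def)
lemma gmul_assoc: "gmul (gmul g h) k = gmul g (gmul h k)" by (auto simp: gmul_def)
lemma gmul_one: "gmul gone g = g" "gmul g gone = g" by (auto simp: gmul_def gone_def)

lemma coords_mul: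
  assumes g: "g \<in> G" and h: "h \<in> G"
  shows "[cz (gmul g h) k = cz g k + cz h k] (mod int l)"
proof (cases "k \<le> n")
  case True
  have "z ^ coords n l z (gmul g h) k = (\<Prod>j\<in>{1..k}. g j * h j)"
    using pref[OF gmul_G[OF g h] True] by (simp add: gmul_def)
  also have "\<dots> = z ^ coords n l z g k * z ^ coords n l z h k"
    using pref[OF g True] pref[OF h True] by (simp add: prod.distrib)
  finally have "z powi (cz (gmul g h) k) = z powi (cz g k + cz h k)"
    by (simp flip: zpowi_add)
  then show ?thesis using zpowi_eq by blast
next
  case False
  then show ?thesis using coords_out[OF g] coords_out[OF h] coords_out[OF gmul_G[OF g h]]
    by (simp add: cong_def)
qed

lemma coords_one: "coords n l z gone k = 0"
proof (cases "k \<le> n")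
  case True
  have "z ^ coords n l z gone k = z ^ 0" using pref[OF gone_G True] by (simp add: gone_def)
  then show ?thesis using zpow_inj[OF coords_lt[OF gone_G]] l2 by simp
next
  case False then show ?thesis using coords_out[OF gone_G] by simp
qed

lemma alpha_def': "alpha n l z g h = z powi (- (\<Sum>k\<in>{1..n-2}. cz g k * cz h (k+1)))"
  by (simp add: alpha_def)

lemma alpha_mul_left:
  assumes "g \<in> G" "h \<in> G" "k \<in> G"
  shows "alpha n l z (gmul g h) k = alpha n l z g k * alpha n l z h k"
proof -
  have "[(\<Sum>i\<in>{1..n-2}. cz (gmul g h) i * cz k (i+1)) = (\<Sum>i\<in>{1..n-2}. (cz g i + cz h i) * cz k (i+1))] (mod int l)"
    by (intro cong_sum cong_mult coords_mul assms cong_refl)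
  moreover have "(\<Sum>i\<in>{1..n-2}. (cz g i + cz h i) * cz k (i+1)) = (\<Sum>i\<in>{1..n-2}. cz g i * cz k (i+1)) + (\<Sum>i\<in>{1..n-2}. cz h i * cz k (i+1))"
    by (simp add: sum.distrib algebra_simps)
  ultimately have "[- (\<Sum>i\<in>{1..n-2}. cz (gmul g h) i * cz k (i+1)) = - ((\<Sum>i\<in>{1..n-2}. cz g i * cz k (i+1)) + (\<Sum>i\<in>{1..n-2}. cz h i * cz k (i+1)))] (mod int l)"
    by (simp only: cong_minus_minus_iff)
  then have "[- (\<Sum>i\<in>{1..n-2}. cz (gmul g h) i * cz k (i+1)) = - (\<Sum>i\<in>{1..n-2}. cz g i * cz k (i+1)) + - (\<Sum>i\<in>{1..n-2}. cz h i * cz k (i+1))] (mod int l)"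
    by simp
  then show ?thesis unfolding alpha_def' zpowi_add using zpowi_eq by blast
qed

lemma alpha_mul_right:
  assumes "g \<in> G" "h \<in> G" "k \<in> G"
  shows "alpha n l z k (gmul g h) = alpha n l z k g * alpha n l z k h"
proof -
  have "[(\<Sum>i\<in>{1..n-2}. cz k i * cz (gmul g h) (i+1)) = (\<Sum>i\<in>{1..n-2}. cz k i * (cz g (i+1) + cz h (i+1)))] (mod int l)"
    by (intro cong_sum cong_mult coords_mul assms cong_refl)
  moreover have "(\<Sum>i\<in>{1..n-2}. cz k i * (cz g (i+1) + cz h (i+1))) = (\<Sum>i\<in>{1..n-2}. cz k i * cz g (i+1)) + (\<Sum>i\<in>{1..n-2}. cz k i * cz h (i+1))"
    by (simp add: sum.distrib algebra_simps)
  ultimately have "[- (\<Sum>i\<in>{1..n-2}. cz k i * cz (gmul g h) (i+1)) = - ((\<Sum>i\<in>{1..n-2}. cz k i * cz g (i+1)) + (\<Sum>i\<in>{1..n-2}. cz k i * cz h (i+1)))] (mod int l)"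
    by (simp only: cong_minus_minus_iff)
  then have "[- (\<Sum>i\<in>{1..n-2}. cz k i * cz (gmul g h) (i+1)) = - (\<Sum>i\<in>{1..n-2}. cz k i * cz g (i+1)) + - (\<Sum>i\<in>{1..n-2}. cz k i * cz h (i+1))] (mod int l)"
    by simp
  then show ?thesis unfolding alpha_def' zpowi_add using zpowi_eq by blast
qed

lemma alpha_one: "alpha n l z gone h = 1" "alpha n l z h gone = 1"
  by (simp_all add: alpha_def coords_one)

lemma alpha_cocycle:
  assumes "g \<in> G" "h \<in> G" "k \<in> G"
  shows "alpha n l z g h * alpha n l z (gmul g h) k = alpha n l z h k * alpha n l z g (gmul h k)"
  using assms by (simp add: alpha_mul_left alpha_mul_right)

lemma yact_def': "yact n l z g p = z powi (\<Sum>k\<in>{1..n-1}. cz g k * (p k - p (k+1)))"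
  by (simp add: yact_def)

lemma yact_add: "yact n l z g (\<lambda>i. p i + q i) = yact n l z g p * yact n l z g q"
  unfolding yact_def' zpowi_add sum.distrib[symmetric]
  by (rule arg_cong[where f="power_int z"], rule sum.cong) (simp_all add: algebra_simps)

lemma yact_zero: "yact n l z g (\<lambda>_. 0) = 1"
  by (simp add: yact_def)

lemma yact_one: "yact n l z gone p = 1"
  by (simp add: yact_def coords_one)

lemma yact_mul:
  assumes "g \<in> G" "h \<in> G"
  shows "yact n l z (gmul g h) p = yact n l z g p * yact n l z h p"
proof -
  have "[(\<Sum>k\<in>{1..n-1}. cz (gmul g h) k * (p k - p (k+1))) = (\<Sum>k\<in>{1..n-1}. (cz g k + cz h k) * (p k - p (k+1)))] (mod int l)"
    by (intro cong_sum cong_mult coords_mul assms cong_refl)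
  moreover have "(\<Sum>k\<in>{1..n-1}. (cz g k + cz h k) * (p k - p (k+1))) = (\<Sum>k\<in>{1..n-1}. cz g k * (p k - p (k+1))) + (\<Sum>k\<in>{1..n-1}. cz h k * (p k - p (k+1)))"
    unfolding sum.distrib[symmetric] by (rule sum.cong) (simp_all add: algebra_simps)
  ultimately have "[(\<Sum>k\<in>{1..n-1}. cz (gmul g h) k * (p k - p (k+1))) = (\<Sum>k\<in>{1..n-1}. cz g k * (p k - p (k+1))) + (\<Sum>k\<in>{1..n-1}. cz h k * (p k - p (k+1)))] (mod int l)"
    by simp
  then show ?thesis unfolding yact_def' zpowi_add using zpowi_eq by blast
qed

lemma yact_single:
  assumes g: "g \<in> G" and s: "s \<in> {1..n}"
  shows "yact n l z g (\<lambda>i. if i = s then v else 0) = g s powi v"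
proof -
  have "(\<Sum>k\<in>{1..n-1}. cz g k * ((if k = s then v else 0) - (if k + 1 = s then v else 0)))
      = v * ((\<Sum>k\<in>{1..n-1}. if k = s then cz g k else 0) - (\<Sum>k\<in>{1..n-1}. if k = s - 1 then cz g k else 0))"
  proof -
    have "cz g k * ((if k = s then v else 0) - (if k + 1 = s then v else 0))
        = v * ((if k = s then cz g k else 0) - (if k = s - 1 then cz g k else 0))" if "k \<in> {1..n-1}" for k
      using that s by (cases "k = s"; cases "k + 1 = s") auto
    then have "(\<Sum>k\<in>{1..n-1}. cz g k * ((if k = s then v else 0) - (if k + 1 = s then v else 0)))
       = (\<Sum>k\<in>{1..n-1}. v * ((if k = s then cz g k else 0) - (if k = s - 1 then cz g k else 0)))"
      by (rule sum.cong[OF refl])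
    then show ?thesis by (simp only: sum_distrib_left[symmetric] sum_subtractf)
  qed
  also have "(\<Sum>k\<in>{1..n-1}. if k = s then cz g k else 0) = cz g s"
    using coords_n[OF g] s by (cases "s = n") auto
  also have "(\<Sum>k\<in>{1..n-1}. if k = s - 1 then cz g k else 0) = cz g (s - 1)"
    using coords_0[OF g] s by auto
  finally have "yact n l z g (\<lambda>i. if i = s then v else 0) = z powi ((cz g s - cz g (s - 1)) * v)"
    unfolding yact_def' by (simp add: mult.commute)
  also have "\<dots> = g s powi v" using G_val[OF g s] by (simp add: power_int_mult)
  finally show ?thesis .
qed

lemma gen_val: assumes "k \<in> {1..n}" "j \<in> {1..n}"
  shows "gen n z k j = (if j = k then z else if j = succ_idx n k then inverse z else 1)"
  using assms unfolding gen_def by simp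

lemma gen_G: assumes k: "k \<in> {1..n}" shows "gen n z k \<in> G"
proof -
  have sk: "succ_idx n k \<in> {1..n}" "succ_idx n k \<noteq> k" using succ_in[OF k] succ_ne[OF k] by auto
  have "gen n z k j ^ l = 1" for j
  proof (cases "j \<in> {1..n}")
    case True then show ?thesis using zl by (simp add: gen_val[OF k True] power_inverse)
  next
    case False then show ?thesis unfolding gen_def by (simp only: if_not_P[OF False]) simp
  qed
  moreover have "j \<notin> {1..n} \<Longrightarrow> gen n z k j = 1" for j unfolding gen_def by (rule if_not_P)
  moreover have "(\<Prod>j\<in>{1..n}. gen n z k j) = 1"
  proof -
    have "(\<Prod>j\<in>{1..n}. gen n z k j) = (\<Prod>j\<in>{1..n}. (if j = k then z else 1) * (if j = succ_idx n k then inverse z else 1))"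
      by (rule prod.cong[OF refl]) (use sk in \<open>auto simp: gen_val[OF k]\<close>)
    also have "\<dots> = z * inverse z" using k sk by (simp add: prod.distrib)
    finally show ?thesis using z_nz by simp
  qed
  ultimately show ?thesis unfolding Gset_def by blast
qed

lemma coords_gen_lt:
  assumes j: "j \<in> {1..n-1}"
  shows "coords n l z (gen n z j) k = (if k = j then 1 else 0)"
proof (cases "k \<le> n")
  case True
  have jn: "j \<in> {1..n}" "succ_idx n j = j + 1" using j n3 by (auto simp: succ_idx_def)
  have "(\<Prod>i\<in>{1..k}. gen n z j i) = (\<Prod>i\<in>{1..k}. (if i = j then z else 1) * (if i = j + 1 then inverse z else 1))"
    by (rule prod.cong[OF refl]) (use True jn in \<open>auto simp: gen_val\<close>)
  also have "\<dots> = (if j \<in> {1..k} then z else 1) * (if j + 1 \<in> {1..k} then inverse z else 1)"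
    by (simp only: prod.distrib prod.delta finite_atLeastAtMost)
  also have "\<dots> = z ^ (if k = j then 1 else 0)"
    using j z_nz by auto
  finally have "z ^ coords n l z (gen n z j) k = z ^ (if k = j then 1 else 0)"
    using pref[OF gen_G[OF jn(1)] True] by simp
  then show ?thesis
    by (rule zpow_inj[OF coords_lt[OF gen_G[OF jn(1)]], rotated]) (use l2 in auto)
next
  case False then show ?thesis using coords_out[OF gen_G] j by auto
qed

lemma coords_gen_n:
  "coords n l z (gen n z n) k = (if k \<in> {1..n-1} then l - 1 else 0)"
proof (cases "k \<le> n")
  case True
  have jn: "n \<in> {1..n}" "succ_idx n n = 1" using n3 by (auto simp: succ_idx_def)
  have "(\<Prod>i\<in>{1..k}. gen n z n i) = (\<Prod>i\<in>{1..k}. (if i = n then z else 1) * (if i = 1 then inverse z else 1))"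
    by (rule prod.cong[OF refl]) (use True jn n3 in \<open>auto simp: gen_val\<close>)
  also have "\<dots> = (if n \<in> {1..k} then z else 1) * (if 1 \<in> {1..k} then inverse z else 1)"
    by (simp only: prod.distrib prod.delta finite_atLeastAtMost)
  also have "\<dots> = z ^ (if k \<in> {1..n-1} then l - 1 else 0)"
  proof -
    have zi: "z ^ (l - 1) = inverse z"
    proof -
      have "z * z ^ (l - 1) = 1" using zl l2 by (metis One_nat_def Suc_diff_1 not_numeral_le_zero not_gr0 power_Suc)
      then show ?thesis by (metis inverse_unique)
    qed
    show ?thesis using True n3 zi z_nz by auto
  qed
  finally have "z ^ coords n l z (gen n z n) k = z ^ (if k \<in> {1..n-1} then l - 1 else 0)"
    using pref[OF gen_G[OF jn(1)] True] by simp
  then show ?thesis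
    by (rule zpow_inj[OF coords_lt[OF gen_G[OF jn(1)]], rotated]) (use l2 in auto)
next
  case False then show ?thesis using coords_out[OF gen_G, of n k] n3 by auto
qed

lemma gen_cross:
  assumes i: "i \<in> {1..n}" and j: "j \<in> {1..n}"
  shows "gen n z i j * gen n z j (succ_idx n i) = 1"
proof -
  have si: "succ_idx n i \<in> {1..n}" "succ_idx n i \<noteq> i" using succ_in[OF i] succ_ne[OF i] by auto
  have sj: "succ_idx n j \<noteq> j" using succ_ne[OF j] .
  have inj: "succ_idx n i = succ_idx n j \<longleftrightarrow> i = j" using succ_inj[OF i j] by auto
  show ?thesis
    using si sj inj z_nz by (auto simp: gen_val[OF i j] gen_val[OF j si(1)])
qed

lemma A3:
  assumes g: "g \<in> G" and j: "j \<in> {1..n}"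
  shows "alpha n l z g (gen n z j) * inverse (g (succ_idx n j)) = g j * alpha n l z (gen n z j) g"
proof (cases "j = n")
  case False
  then have j': "j \<in> {1..n-1}" using j by auto
  have sj: "succ_idx n j = j + 1" "j + 1 \<in> {1..n}" using j' n3 by (auto simp: succ_idx_def)
  have S1: "(\<Sum>k\<in>{1..n-2}. cz g k * cz (gen n z j) (k+1)) = cz g (j - 1)"
  proof -
    have "(\<Sum>k\<in>{1..n-2}. cz g k * cz (gen n z j) (k+1)) = (\<Sum>k\<in>{1..n-2}. if k = j - 1 then cz g k else 0)"
      by (rule sum.cong[OF refl]) (use j' in \<open>auto simp: coords_gen_lt\<close>)
    also have "\<dots> = cz g (j - 1)" using j' coords_0[OF g] by auto
    finally show ?thesis .
  qed
  have S2: "(\<Sum>k\<in>{1..n-2}. cz (gen n z j) k * cz g (k+1)) = cz g (j + 1)"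
  proof -
    have "(\<Sum>k\<in>{1..n-2}. cz (gen n z j) k * cz g (k+1)) = (\<Sum>k\<in>{1..n-2}. if k = j then cz g (k+1) else 0)"
      by (rule sum.cong[OF refl]) (use j' in \<open>auto simp: coords_gen_lt\<close>)
    also have "\<dots> = cz g (j + 1)" using j' coords_n[OF g] n3
      by (cases "j = n - 1") auto
    finally show ?thesis .
  qed
  have "alpha n l z g (gen n z j) * inverse (g (succ_idx n j))
      = z powi (- cz g (j - 1)) * inverse (z powi (cz g (j+1) - cz g j))"
    unfolding alpha_def' S1 sj(1) using G_val[OF g sj(2)] by simp
  also have "\<dots> = z powi (cz g j - cz g (j - 1) - cz g (j+1))"
    unfolding zpowi_inv zpowi_add by (simp add: algebra_simps)
  also have "\<dots> = z powi (cz g j - cz g (j - 1)) * z powi (- cz g (j+1))"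
    unfolding zpowi_add by (simp add: algebra_simps)
  also have "\<dots> = g j * alpha n l z (gen n z j) g"
    unfolding alpha_def' S2 using G_val[OF g j] by simp
  finally show ?thesis .
next
  case True
  have sn: "succ_idx n n = 1" by (simp add: succ_idx_def)
  define L where "L = int (l - 1)"
  have S1: "(\<Sum>k\<in>{1..n-2}. cz g k * cz (gen n z n) (k+1)) = L * (\<Sum>k\<in>{1..n-2}. cz g k)"
    unfolding sum_distrib_left
    by (rule sum.cong[OF refl]) (use n3 in \<open>auto simp: coords_gen_n L_def\<close>)
  have S2: "(\<Sum>k\<in>{1..n-2}. cz (gen n z n) k * cz g (k+1)) = L * (\<Sum>k\<in>{1..n-2}. cz g (k+1))"
    unfolding sum_distrib_left
    by (rule sum.cong[OF refl]) (use n3 in \<open>auto simp: coords_gen_n L_def\<close>)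
  define T where "T = (\<Sum>k\<in>{2..n-2}. cz g k)"
  have T1: "(\<Sum>k\<in>{1..n-2}. cz g k) = cz g 1 + T"
    unfolding T_def using n3 by (subst sum.atLeast_Suc_atMost) (auto simp: numeral_2_eq_2)
  have T2: "(\<Sum>k\<in>{1..n-2}. cz g (k+1)) = T + cz g (n - 1)"
  proof -
    have "(\<Sum>k\<in>{1..n-2}. cz g (k+1)) = (\<Sum>k\<in>{Suc 1..Suc (n-2)}. cz g k)"
      by (subst sum.shift_bounds_cl_Suc_ivl) simp
    also have "Suc (n - 2) = Suc (n - 3) + 1" using n3 by simp
    also have "(\<Sum>k\<in>{Suc 1..Suc (n - 3) + 1}. cz g k) = (\<Sum>k\<in>{Suc 1..Suc (n - 3)}. cz g k) + cz g (Suc (n-3) + 1)"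
      by (simp add: sum.cl_ivl_Suc)
    also have "Suc (n - 3) = n - 2" using n3 by simp
    also have "n - 2 + 1 = n - 1" using n3 by simp
    finally show ?thesis unfolding T_def by (simp add: numeral_2_eq_2)
  qed
  have g1: "g 1 = z powi cz g 1" using G_val[OF g, of 1] coords_0[OF g] n3 by simp
  have gn: "g n = z powi (- cz g (n - 1))" using G_val[OF g, of n] coords_n[OF g] n3 by simp
  have "alpha n l z g (gen n z n) * inverse (g (succ_idx n n)) = z powi (- (L * (cz g 1 + T)) - cz g 1)"
    unfolding alpha_def' S1 T1 sn g1 zpowi_inv zpowi_add by (simp add: algebra_simps)
  also have "\<dots> = z powi (- cz g (n - 1) - L * (T + cz g (n - 1)))"
  proof -
    have "int l = L + 1" using l2 by (simp add: L_def)
    then have "(- (L * (cz g 1 + T)) - cz g 1) - (- cz g (n - 1) - L * (T + cz g (n - 1))) = int l * (cz g (n-1) - cz g 1)"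
      by (simp add: algebra_simps)
    then have "[- (L * (cz g 1 + T)) - cz g 1 = - cz g (n - 1) - L * (T + cz g (n - 1))] (mod int l)"
      unfolding cong_iff_dvd_diff by simp
    then show ?thesis using zpowi_eq by blast
  qed
  also have "\<dots> = g n * alpha n l z (gen n z n) g"
    unfolding alpha_def' S2 T2 gn zpowi_add by (rule arg_cong[where f="power_int z"]) (simp add: algebra_simps)
  finally show ?thesis using True by simp
qed
end



lemma tw_scale_left:
  assumes "finite (supp F)" "finite (supp H)"
  shows "tw_mult comb coef (\<lambda>y. a * F y) H c = a * tw_mult comb coef F H c"
  using tw_lin_left[OF assms(1) assms(1) assms(2), of comb coef a 0 c] by simp

lemma tw_scale_right:
  assumes "finite (supp F)" "finite (supp H)"
  shows "tw_mult comb coef H (\<lambda>y. a * F y) c = a * tw_mult comb coef H F c"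
  using tw_lin_right[OF assms(1) assms(1) assms(2), of comb coef a 0 c] by simp

lemma tw_diff_left:
  assumes "finite (supp F)" "finite (supp G)" "finite (supp H)"
  shows "tw_mult comb coef (\<lambda>y. F y - G y) H c = tw_mult comb coef F H c - tw_mult comb coef G H c"
  using tw_lin_left[OF assms, of comb coef 1 "-1" c] by simp

lemma tw_diff_right:
  assumes "finite (supp F)" "finite (supp G)" "finite (supp H)"
  shows "tw_mult comb coef H (\<lambda>y. F y - G y) c = tw_mult comb coef H F c - tw_mult comb coef H G c"
  using tw_lin_right[OF assms, of comb coef 1 "-1" c] by simp

lemma supp_basis: "supp (basis_el b) = {b}" by (auto simp: supp_def basis_el_def)

lemma supp_lin: "supp (\<lambda>y. a * F y + b * H y) \<subseteq> supp F \<union> supp H"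
  by (auto simp: supp_def)
lemma supp_diff: "supp (\<lambda>y. F y - H y) \<subseteq> supp F \<union> supp H"
  by (auto simp: supp_def)
lemma supp_scale: "supp (\<lambda>y. a * F y) \<subseteq> supp F"
  by (auto simp: supp_def)

lemma fin_lin: "finite (supp F) \<Longrightarrow> finite (supp H) \<Longrightarrow> finite (supp (\<lambda>y. a * F y + b * H y))"
  by (rule finite_subset[of _ "supp F \<union> supp H"]) (auto simp: supp_def)

lemma fin_diff: "finite (supp F) \<Longrightarrow> finite (supp H) \<Longrightarrow> finite (supp (\<lambda>y. F y - H y))"
  by (rule finite_subset[of _ "supp F \<union> supp H"]) (auto simp: supp_def)

lemma fin_scale: "finite (supp F) \<Longrightarrow> finite (supp (\<lambda>y. a * F y))"
  by (rule finite_subset[of _ "supp F"]) (auto simp: supp_def)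

locale PT = PS +
  fixes t :: "nat \<Rightarrow> complex"
begin

abbreviation TA where "TA \<equiv> Talg n l"
abbreviation TM where "TM \<equiv> tmul n l z"
abbreviation Bt :: "(nat \<Rightarrow> int) \<Rightarrow> (nat \<Rightarrow> complex) \<Rightarrow> (nat \<Rightarrow> int) \<times> (nat \<Rightarrow> complex) \<Rightarrow> complex"
  where "Bt p g \<equiv> basis_el (p, g)"

definition Tcomb :: "(nat \<Rightarrow> int) \<times> (nat \<Rightarrow> complex) \<Rightarrow> (nat \<Rightarrow> int) \<times> (nat \<Rightarrow> complex) \<Rightarrow> (nat \<Rightarrow> int) \<times> (nat \<Rightarrow> complex)"
  where "Tcomb = (\<lambda>(p, g) (p', h). (\<lambda>i. p i + p' i, gmul g h))"
definition Tcoef :: "(nat \<Rightarrow> int) \<times> (nat \<Rightarrow> complex) \<Rightarrow> (nat \<Rightarrow> int) \<times> (nat \<Rightarrow> complex) \<Rightarrow> complex"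
  where "Tcoef = (\<lambda>(p, g) (p', h). alpha n l z g h * yact n l z g p')"

lemma TM_def': "TM = tw_mult Tcomb Tcoef" by (simp add: tmul_def Tcomb_def Tcoef_def)

lemma TA_iff: "F \<in> TA \<longleftrightarrow> finite (supp F) \<and> supp F \<subseteq> Tbasis n l"
  by (simp add: Talg_def fin_supp_on_def supp_def)

lemma TA_fin: "F \<in> TA \<Longrightarrow> finite (supp F)" by (simp add: TA_iff)

lemma Tbasis_iff: "(p, g) \<in> Tbasis n l \<longleftrightarrow> (\<forall>i. i \<notin> {1..n} \<longrightarrow> p i = 0) \<and> g \<in> G"
  by (simp add: Tbasis_def)

lemma TM_basis: "TM (Bt p g) (Bt q h) = (\<lambda>c. alpha n l z g h * yact n l z g q * Bt (\<lambda>i. p i + q i) (gmul g h) c)"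
  by (rule ext) (simp add: TM_def' tw_basis Tcomb_def Tcoef_def)

lemma Tcomb_basis: "a \<in> Tbasis n l \<Longrightarrow> b \<in> Tbasis n l \<Longrightarrow> Tcomb a b \<in> Tbasis n l"
  by (cases a; cases b) (auto simp: Tcomb_def Tbasis_iff gmul_G)

lemma TM_closed: assumes "F \<in> TA" "H \<in> TA" shows "TM F H \<in> TA"
proof -
  have "supp (TM F H) \<subseteq> (\<lambda>(a,b). Tcomb a b) ` (supp F \<times> supp H)"
    unfolding TM_def' by (rule tw_supp)
  moreover have "(\<lambda>(a,b). Tcomb a b) ` (supp F \<times> supp H) \<subseteq> Tbasis n l"
    using assms Tcomb_basis by (force simp: TA_iff)
  moreover have "finite ((\<lambda>(a,b). Tcomb a b) ` (supp F \<times> supp H))" using assms by (simp add: TA_iff)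
  ultimately show ?thesis by (meson TA_iff finite_subset subset_trans)
qed

lemma TA_lin: "F \<in> TA \<Longrightarrow> H \<in> TA \<Longrightarrow> (\<lambda>y. a * F y + b * H y) \<in> TA"
  unfolding TA_iff using supp_lin[of a F b H] fin_lin[of F H a b] by blast

lemma TA_diff: "F \<in> TA \<Longrightarrow> H \<in> TA \<Longrightarrow> (\<lambda>y. F y - H y) \<in> TA"
  unfolding TA_iff using supp_diff[of F H] fin_diff[of F H] by blast

lemma TA_scale: "F \<in> TA \<Longrightarrow> (\<lambda>y. a * F y) \<in> TA"
  unfolding TA_iff using supp_scale[of a F] fin_scale[of F a] by blast

lemma TA_zero: "(\<lambda>_. 0) \<in> TA" by (simp add: TA_iff supp_def)

lemma TA_basis: "b \<in> Tbasis n l \<Longrightarrow> basis_el b \<in> TA"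
  by (simp add: TA_iff supp_basis)

lemma TA_sum: "finite I \<Longrightarrow> (\<And>i. i \<in> I \<Longrightarrow> f i \<in> TA) \<Longrightarrow> (\<lambda>y. \<Sum>i\<in>I. f i y) \<in> TA"
proof (induction I rule: finite_induct)
  case empty then show ?case using TA_zero by simp
next
  case (insert x F)
  have "(\<lambda>y. \<Sum>i\<in>insert x F. f i y) = (\<lambda>y. 1 * f x y + 1 * (\<Sum>i\<in>F. f i y))"
    using insert by simp
  then show ?case using insert TA_lin[of "f x" "\<lambda>y. \<Sum>i\<in>F. f i y" 1 1] by simp
qed

lemma TM_assoc: assumes "F \<in> TA" "H \<in> TA" "K \<in> TA" shows "TM (TM F H) K = TM F (TM H K)"
proof
  fix d
  show "TM (TM F H) K d = TM F (TM H K) d"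
    unfolding TM_def'
  proof (rule tw_assoc)
    show "finite (supp F)" "finite (supp H)" "finite (supp K)" using assms by (auto simp: TA_iff)
    fix a b c assume abc: "a \<in> supp F" "b \<in> supp H" "c \<in> supp K"
    then have abc': "a \<in> Tbasis n l" "b \<in> Tbasis n l" "c \<in> Tbasis n l" using assms by (auto simp: TA_iff)
    obtain p g where a: "a = (p, g)" by fastforce
    obtain q h where b: "b = (q, h)" by fastforce
    obtain r k where c: "c = (r, k)" by fastforce
    have G: "g \<in> G" "h \<in> G" "k \<in> G" using abc' a b c by (auto simp: Tbasis_iff)
    show "Tcomb (Tcomb a b) c = Tcomb a (Tcomb b c) \<and> Tcoef a b * Tcoef (Tcomb a b) c = Tcoef b c * Tcoef a (Tcomb b c)"
    proof
      show "Tcomb (Tcomb a b) c = Tcomb a (Tcomb b c)"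
        by (simp add: a b c Tcomb_def gmul_assoc add.assoc)
      have "Tcoef a b * Tcoef (Tcomb a b) c = (alpha n l z g h * alpha n l z (gmul g h) k) * (yact n l z g q * yact n l z g r * yact n l z h r)"
        by (simp add: a b c Tcomb_def Tcoef_def yact_mul G)
      also have "\<dots> = (alpha n l z h k * alpha n l z g (gmul h k)) * (yact n l z g q * yact n l z g r * yact n l z h r)"
        by (simp add: alpha_cocycle G)
      also have "\<dots> = Tcoef b c * Tcoef a (Tcomb b c)"
        by (simp add: a b c Tcomb_def Tcoef_def yact_add)
      finally show "Tcoef a b * Tcoef (Tcomb a b) c = Tcoef b c * Tcoef a (Tcomb b c)" .
    qed
  qed
qed

lemma TM_diff_left: "F \<in> TA \<Longrightarrow> H \<in> TA \<Longrightarrow> K \<in> TA \<Longrightarrow> TM (\<lambda>y. F y - H y) K = (\<lambda>c. TM F K c - TM H K c)"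
  unfolding TM_def' by (rule ext, rule tw_diff_left) (auto simp: TA_iff)
lemma TM_diff_right: "F \<in> TA \<Longrightarrow> H \<in> TA \<Longrightarrow> K \<in> TA \<Longrightarrow> TM K (\<lambda>y. F y - H y) = (\<lambda>c. TM K F c - TM K H c)"
  unfolding TM_def' by (rule ext, rule tw_diff_right) (auto simp: TA_iff)
lemma TM_scale_left: "F \<in> TA \<Longrightarrow> K \<in> TA \<Longrightarrow> TM (\<lambda>y. a * F y) K = (\<lambda>c. a * TM F K c)"
  unfolding TM_def' by (rule ext, rule tw_scale_left) (auto simp: TA_iff)
lemma TM_scale_right: "F \<in> TA \<Longrightarrow> K \<in> TA \<Longrightarrow> TM K (\<lambda>y. a * F y) = (\<lambda>c. a * TM K F c)"
  unfolding TM_def' by (rule ext, rule tw_scale_right) (auto simp: TA_iff)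
lemma TM_zero_right: "TM F (\<lambda>_. 0) = (\<lambda>_. 0)"
  unfolding TM_def' by (rule ext, rule tw_zero_right)
lemma TM_zero_left: "TM (\<lambda>_. 0) F = (\<lambda>_. 0)"
  unfolding TM_def' by (rule ext, rule tw_zero_left)

lemma tone_eq: "tone = Bt (\<lambda>_. 0) gone" by (simp add: tone_def)
lemma tg_eq: "tg g = Bt (\<lambda>_. 0) g" by (simp add: tg_def)

lemma TM_one_right: assumes "F \<in> TA" shows "TM F tone = F"
proof
  fix c
  have "TM F tone c = (\<Sum>a\<in>supp F. \<Sum>b\<in>{((\<lambda>_. 0), gone)}. of_bool (Tcomb a b = c) * (F a * tone b * Tcoef a b))"
    unfolding TM_def' by (rule tw_sum) (use assms in \<open>auto simp: TA_iff tone_eq supp_basis\<close>)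
  also have "\<dots> = (\<Sum>a\<in>supp F. if a = c then F a else 0)"
  proof (rule sum.cong[OF refl])
    fix a assume "a \<in> supp F"
    obtain p h where a: "a = (p, h)" by fastforce
    show "(\<Sum>b\<in>{((\<lambda>_. 0), gone)}. of_bool (Tcomb a b = c) * (F a * tone b * Tcoef a b)) = (if a = c then F a else 0)"
      by (simp add: a Tcomb_def Tcoef_def tone_eq basis_el_def gmul_one alpha_one yact_zero)
  qed
  also have "\<dots> = F c" using TA_fin[OF assms] by (simp add: supp_def)
  finally show "TM F tone c = F c" .
qed

lemma TM_one_left: assumes "F \<in> TA" shows "TM tone F = F"
proof
  fix c
  have "TM tone F c = (\<Sum>a\<in>{((\<lambda>_. 0), gone)}. \<Sum>b\<in>supp F. of_bool (Tcomb a b = c) * (tone a * F b * Tcoef a b))"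
    unfolding TM_def' by (rule tw_sum) (use assms in \<open>auto simp: TA_iff tone_eq supp_basis\<close>)
  also have "\<dots> = (\<Sum>b\<in>supp F. if b = c then F b else 0)"
  proof (simp, rule sum.cong[OF refl])
    fix b assume "b \<in> supp F"
    obtain p h where b: "b = (p, h)" by fastforce
    show "of_bool (Tcomb ((\<lambda>_. 0), gone) b = c) * (tone ((\<lambda>_. 0), gone) * F b * Tcoef ((\<lambda>_. 0), gone) b) = (if b = c then F b else 0)"
      by (simp add: b Tcomb_def Tcoef_def tone_eq basis_el_def gmul_one alpha_one yact_one)
  qed
  also have "\<dots> = F c" using TA_fin[OF assms] by (simp add: supp_def)
  finally show "TM tone F c = F c" .
qed


definition ee :: "nat \<Rightarrow> nat \<Rightarrow> int" where "ee j = (\<lambda>i. if i = j then 1 else 0)"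
definition ne :: "nat \<Rightarrow> nat \<Rightarrow> int" where "ne j = (\<lambda>i. if i = j then -1 else 0)"
definition cc where "cc j = z * t j / (z - 1)"
definition Tx where "Tx j = fdiff (ty j) (\<lambda>y. (z * t j / (z - 1)) * TM (tyinv (succ_idx n j)) (tg (gen n z j)) y)"

lemma ee_Tb: "j \<in> {1..n} \<Longrightarrow> g \<in> G \<Longrightarrow> (ee j, g) \<in> Tbasis n l"
  by (auto simp: Tbasis_iff ee_def)
lemma ne_Tb: "j \<in> {1..n} \<Longrightarrow> g \<in> G \<Longrightarrow> (ne j, g) \<in> Tbasis n l"
  by (auto simp: Tbasis_iff ne_def)
lemma zero_Tb: "g \<in> G \<Longrightarrow> ((\<lambda>_. 0), g) \<in> Tbasis n l"
  by (auto simp: Tbasis_iff)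
lemma tg_TA: "g \<in> G \<Longrightarrow> tg g \<in> TA" by (simp add: tg_eq TA_basis zero_Tb)
lemma tone_TA: "tone \<in> TA" by (simp add: tone_eq TA_basis zero_Tb gone_G)

lemma Tx_alt: assumes j: "j \<in> {1..n}"
  shows "Tx j = (\<lambda>y. Bt (ee j) gone y - cc j * Bt (ne (succ_idx n j)) (gen n z j) y)"
proof -
  have "TM (tyinv s) (tg g) = Bt (ne s) g" for s g
  proof -
    have "tyinv s = Bt (ne s) gone" by (simp add: tyinv_def ymon_def ne_def)
    then show ?thesis by (simp add: tg_eq TM_basis alpha_one yact_one gmul_one)
  qed
  moreover have "ty j = Bt (ee j) gone" by (simp add: ty_def ymon_def ee_def)
  ultimately show ?thesis unfolding Tx_def fdiff_def cc_def by simp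
qed

lemma Tx_TA: "j \<in> {1..n} \<Longrightarrow> Tx j \<in> TA"
  unfolding Tx_alt
  by (intro TA_diff TA_scale TA_basis ee_Tb ne_Tb gone_G gen_G succ_in)

lemma TgTx: assumes g: "g \<in> G" and j: "j \<in> {1..n}"
  shows "TM (tg g) (Tx j) = (\<lambda>y. g j * TM (Tx j) (tg g) y)"
proof -
  let ?s = "succ_idx n j" and ?gj = "gen n z j"
  have sj: "?s \<in> {1..n}" using succ_in[OF j] .
  have gj: "?gj \<in> G" using gen_G[OF j] .
  have m1: "Bt (ee j) gone \<in> TA" by (intro TA_basis ee_Tb j gone_G)
  have m2: "Bt (ne ?s) ?gj \<in> TA" by (intro TA_basis ne_Tb sj gj)
  have m3: "(\<lambda>y. cc j * Bt (ne ?s) ?gj y) \<in> TA" using m2 by (rule TA_scale)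
  have tgA: "tg g \<in> TA" using tg_TA[OF g] .
  have b1: "TM (tg g) (Bt (ee j) gone) = (\<lambda>y. g j * Bt (ee j) g y)"
    using yact_single[OF g j, of 1] by (simp add: tg_eq TM_basis alpha_one gmul_one ee_def)
  have b2: "TM (tg g) (Bt (ne ?s) ?gj) = (\<lambda>y. (alpha n l z g ?gj * inverse (g ?s)) * Bt (ne ?s) (gmul g ?gj) y)"
    using yact_single[OF g sj, of "-1"] by (simp add: tg_eq TM_basis ne_def power_int_minus)
  have b3: "TM (Bt (ee j) gone) (tg g) = Bt (ee j) g"
    by (simp add: tg_eq TM_basis alpha_one yact_one gmul_one)
  have b4: "TM (Bt (ne ?s) ?gj) (tg g) = (\<lambda>y. alpha n l z ?gj g * Bt (ne ?s) (gmul ?gj g) y)"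
    by (simp add: tg_eq TM_basis yact_zero)
  have "TM (tg g) (Tx j) = (\<lambda>c. TM (tg g) (Bt (ee j) gone) c - cc j * TM (tg g) (Bt (ne ?s) ?gj) c)"
    unfolding Tx_alt[OF j] TM_diff_right[OF m1 m3 tgA] TM_scale_right[OF m2 tgA] ..
  also have "\<dots> = (\<lambda>c. g j * Bt (ee j) g c - cc j * (alpha n l z g ?gj * inverse (g ?s)) * Bt (ne ?s) (gmul g ?gj) c)"
    unfolding b1 b2 by (simp add: mult.assoc)
  also have "\<dots> = (\<lambda>c. g j * (Bt (ee j) g c - cc j * (alpha n l z ?gj g * Bt (ne ?s) (gmul ?gj g) c)))"
    using A3[OF g j] by (simp add: gmul_comm[of g] algebra_simps)
  also have "\<dots> = (\<lambda>y. g j * TM (Tx j) (tg g) y)"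
    unfolding Tx_alt[OF j] TM_diff_left[OF m1 m3 tgA] TM_scale_left[OF m2 tgA] b3 b4 ..
  finally show ?thesis .
qed

fun Xw :: "nat list \<Rightarrow> (nat \<Rightarrow> int) \<times> (nat \<Rightarrow> complex) \<Rightarrow> complex" where
  "Xw [] = tone"
| "Xw (j # w) = TM (Tx j) (Xw w)"

lemma Xw_TA: "set w \<subseteq> {1..n} \<Longrightarrow> Xw w \<in> TA"
proof (induction w)
  case Nil then show ?case using tone_TA by simp
next
  case (Cons j w) then show ?case using TM_closed[OF Tx_TA] by simp
qed

lemma Xw_append: "set w \<subseteq> {1..n} \<Longrightarrow> set w' \<subseteq> {1..n} \<Longrightarrow> Xw (w @ w') = TM (Xw w) (Xw w')"
proof (induction w)
  case Nil then show ?case by (simp add: TM_one_left Xw_TA)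
next
  case (Cons j w)
  then show ?case by (simp add: TM_assoc Tx_TA Xw_TA)
qed

lemma xact_cons: "xact g (j # w) = g j * xact g w" by (simp add: xact_def)

lemma Tg_Xw: assumes g: "g \<in> G" shows "set w \<subseteq> {1..n} \<Longrightarrow> TM (tg g) (Xw w) = (\<lambda>y. xact g w * TM (Xw w) (tg g) y)"
proof (induction w)
  case Nil then show ?case by (simp add: TM_one_left TM_one_right tg_TA g xact_def)
next
  case (Cons j w)
  have j: "j \<in> {1..n}" and w: "set w \<subseteq> {1..n}" using Cons by auto
  have X: "Xw w \<in> TA" using Xw_TA[OF w] .
  have T: "Tx j \<in> TA" using Tx_TA[OF j] .
  have tgA: "tg g \<in> TA" using tg_TA[OF g] .
  have "TM (tg g) (Xw (j # w)) = TM (TM (tg g) (Tx j)) (Xw w)"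
    by (simp add: TM_assoc tgA T X)
  also have "\<dots> = (\<lambda>c. g j * TM (TM (Tx j) (tg g)) (Xw w) c)"
    unfolding TgTx[OF g j] by (rule TM_scale_left) (intro TM_closed T tgA, rule X)
  also have "\<dots> = (\<lambda>c. g j * TM (Tx j) (TM (tg g) (Xw w)) c)"
    by (simp add: TM_assoc tgA T X)
  also have "\<dots> = (\<lambda>c. g j * (xact g w * TM (Tx j) (TM (Xw w) (tg g)) c))"
    unfolding Cons.IH[OF w] TM_scale_right[OF TM_closed[OF X tgA] T] ..
  also have "\<dots> = (\<lambda>y. xact g (j # w) * TM (Xw (j # w)) (tg g) y)"
    by (simp add: xact_cons TM_assoc T X tgA mult.assoc)
  finally show ?case .
qed

definition Tb :: "nat list \<times> (nat \<Rightarrow> complex) \<Rightarrow> (nat \<Rightarrow> int) \<times> (nat \<Rightarrow> complex) \<Rightarrow> complex"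
  where "Tb b = TM (Xw (fst b)) (tg (snd b))"

lemma Sbasis_iff: "(w, g) \<in> Sbasis n l \<longleftrightarrow> set w \<subseteq> {1..n} \<and> g \<in> G"
  by (simp add: Sbasis_def)

lemma Tb_TA: "b \<in> Sbasis n l \<Longrightarrow> Tb b \<in> TA"
  by (cases b) (auto simp: Tb_def Sbasis_iff intro!: TM_closed Xw_TA tg_TA)

lemma TM_tg: "TM (tg g) (tg h) = (\<lambda>c. alpha n l z g h * tg (gmul g h) c)"
  by (simp add: tg_eq TM_basis yact_zero)

lemma Tb_mult:
  assumes b1: "(w, g) \<in> Sbasis n l" and b2: "(w', h) \<in> Sbasis n l"
  shows "TM (Tb (w, g)) (Tb (w', h)) = (\<lambda>c. (alpha n l z g h * xact g w') * Tb (w @ w', gmul g h) c)"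
proof -
  have w: "set w \<subseteq> {1..n}" "set w' \<subseteq> {1..n}" and G: "g \<in> G" "h \<in> G" using b1 b2 by (auto simp: Sbasis_iff)
  have X: "Xw w \<in> TA" "Xw w' \<in> TA" using Xw_TA w by auto
  have T: "tg g \<in> TA" "tg h \<in> TA" "tg (gmul g h) \<in> TA" using tg_TA G gmul_G by auto
  have "TM (Tb (w, g)) (Tb (w', h)) = TM (Xw w) (TM (TM (tg g) (Xw w')) (tg h))"
    by (simp add: Tb_def TM_assoc X T TM_closed)
  also have "\<dots> = TM (Xw w) (\<lambda>c. xact g w' * TM (TM (Xw w') (tg g)) (tg h) c)"
    unfolding Tg_Xw[OF G(1) w(2)] TM_scale_left[OF TM_closed[OF X(2) T(1)] T(2)] ..
  also have "\<dots> = (\<lambda>c. xact g w' * TM (Xw w) (TM (Xw w') (TM (tg g) (tg h))) c)"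
    by (subst TM_scale_right) (auto simp: TM_assoc X T TM_closed)
  also have "\<dots> = (\<lambda>c. xact g w' * (alpha n l z g h * TM (Xw w) (TM (Xw w') (tg (gmul g h))) c))"
    unfolding TM_tg TM_scale_right[OF T(3) X(2)] TM_scale_right[OF TM_closed[OF X(2) T(3)] X(1)] ..
  also have "\<dots> = (\<lambda>c. (alpha n l z g h * xact g w') * Tb (w @ w', gmul g h) c)"
    unfolding Tb_def fst_conv snd_conv Xw_append[OF w] TM_assoc[OF X T(3)] by (simp add: mult_ac)
  finally show ?thesis .
qed

definition aa where "aa i = Bt (ee i) gone"
definition AA where "AA i = Bt (ne (succ_idx n i)) (gen n z i)"

lemma aa_TA: "i \<in> {1..n} \<Longrightarrow> aa i \<in> TA" unfolding aa_def by (intro TA_basis ee_Tb gone_G)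
lemma AA_TA: "i \<in> {1..n} \<Longrightarrow> AA i \<in> TA" unfolding AA_def by (intro TA_basis ne_Tb gen_G succ_in)

lemma Tx_aa: "i \<in> {1..n} \<Longrightarrow> Tx i = (\<lambda>y. aa i y - cc i * AA i y)"
  unfolding aa_def AA_def by (rule Tx_alt)

lemma Tx_expand:
  assumes i: "i \<in> {1..n}" and j: "j \<in> {1..n}"
  shows "TM (Tx i) (Tx j) = (\<lambda>c. TM (aa i) (aa j) c - cc j * TM (aa i) (AA j) c - cc i * TM (AA i) (aa j) c + cc i * cc j * TM (AA i) (AA j) c)"
proof -
  have m: "aa i \<in> TA" "AA i \<in> TA" "aa j \<in> TA" "AA j \<in> TA" "(\<lambda>y. cc i * AA i y) \<in> TA" "(\<lambda>y. cc j * AA j y) \<in> TA"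
    using aa_TA AA_TA TA_scale i j by auto
  have t: "Tx j \<in> TA" using Tx_TA j by auto
  have "TM (Tx i) (Tx j) = (\<lambda>c. TM (aa i) (Tx j) c - cc i * TM (AA i) (Tx j) c)"
    unfolding Tx_aa[OF i] TM_diff_left[OF m(1) m(5) t] TM_scale_left[OF m(2) t] ..
  also have "\<dots> = (\<lambda>c. (TM (aa i) (aa j) c - cc j * TM (aa i) (AA j) c) - cc i * (TM (AA i) (aa j) c - cc j * TM (AA i) (AA j) c))"
    unfolding Tx_aa[OF j] TM_diff_right[OF m(3) m(6) m(1)] TM_diff_right[OF m(3) m(6) m(2)]
      TM_scale_right[OF m(4) m(1)] TM_scale_right[OF m(4) m(2)] ..
  also have "\<dots> = (\<lambda>c. TM (aa i) (aa j) c - cc j * TM (aa i) (AA j) c - cc i * TM (AA i) (aa j) c + cc i * cc j * TM (AA i) (AA j) c)"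
    by (simp add: algebra_simps)
  finally show ?thesis .
qed

lemma P1: "TM (aa i) (aa j) = Bt (\<lambda>k. ee i k + ee j k) gone"
  unfolding aa_def TM_basis by (simp add: alpha_one yact_one gmul_one)
lemma P2: "TM (aa i) (AA j) = Bt (\<lambda>k. ee i k + ne (succ_idx n j) k) (gen n z j)"
  unfolding aa_def AA_def TM_basis by (simp add: alpha_one yact_one gmul_one)
lemma P3: "i \<in> {1..n} \<Longrightarrow> j \<in> {1..n} \<Longrightarrow> TM (AA i) (aa j) = (\<lambda>c. gen n z i j * Bt (\<lambda>k. ne (succ_idx n i) k + ee j k) (gen n z i) c)"
  unfolding aa_def AA_def TM_basis using yact_single[OF gen_G, of i j 1]
  by (simp add: alpha_one gmul_one ee_def)
lemma P4: "i \<in> {1..n} \<Longrightarrow> j \<in> {1..n} \<Longrightarrow> TM (AA i) (AA j) = (\<lambda>c. alpha n l z (gen n z i) (gen n z j) * inverse (gen n z i (succ_idx n j)) * Bt (\<lambda>k. ne (succ_idx n i) k + ne (succ_idx n j) k) (gmul (gen n z i) (gen n z j)) c)"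
  unfolding aa_def AA_def TM_basis using yact_single[OF gen_G succ_in, of i j "-1"]
  by (simp add: ne_def power_int_minus)

lemma P4_sym: assumes i: "i \<in> {1..n}" and j: "j \<in> {1..n}"
  shows "alpha n l z (gen n z i) (gen n z j) * inverse (gen n z i (succ_idx n j))
       = alpha n l z (gen n z j) (gen n z i) * inverse (gen n z j (succ_idx n i))"
proof -
  have "alpha n l z (gen n z i) (gen n z j) * inverse (gen n z i (succ_idx n j))
        = gen n z i j * alpha n l z (gen n z j) (gen n z i)"
    by (rule A3[OF gen_G[OF i] j])
  moreover have "gen n z i j = inverse (gen n z j (succ_idx n i))"
    using gen_cross[OF i j] by (metis inverse_unique mult.commute)
  ultimately show ?thesis by simp
qed

lemma Tx_comm:
  assumes i: "i \<in> {1..n}" and j: "j \<in> {1..n}"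
  shows "TM (Tx i) (Tx j) = (\<lambda>y. TM (Tx j) (Tx i) y
     - cc j * (1 - gen n z j i) * Bt (\<lambda>k. ee i k + ne (succ_idx n j) k) (gen n z j) y
     - cc i * (gen n z i j - 1) * Bt (\<lambda>k. ee j k + ne (succ_idx n i) k) (gen n z i) y)"
proof -
  have f1: "(\<lambda>k. ee i k + ee j k) = (\<lambda>k. ee j k + ee i k)" by (auto simp: add.commute)
  have f2: "(\<lambda>k. ne (succ_idx n i) k + ee j k) = (\<lambda>k. ee j k + ne (succ_idx n i) k)" by (auto simp: add.commute)
  have f3: "(\<lambda>k. ne (succ_idx n j) k + ee i k) = (\<lambda>k. ee i k + ne (succ_idx n j) k)" by (auto simp: add.commute)
  have f4: "(\<lambda>k. ne (succ_idx n i) k + ne (succ_idx n j) k) = (\<lambda>k. ne (succ_idx n j) k + ne (succ_idx n i) k)" by (auto simp: add.commute)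
  show ?thesis
    unfolding Tx_expand[OF i j] Tx_expand[OF j i] P1 P2 P3[OF i j] P3[OF j i] P4[OF i j] P4[OF j i]
      f1 f2 f3 f4 P4_sym[OF i j] gmul_comm[of "gen n z i"]
    by (rule ext) (simp add: algebra_simps)
qed

definition deg :: "(nat \<Rightarrow> int) \<Rightarrow> int" where "deg p = (\<Sum>j\<in>{1..n}. p j)"
definition cnt :: "nat list \<Rightarrow> nat \<Rightarrow> int" where "cnt w = (\<lambda>j. int (count (mset w) j))"

lemma deg_diff: "deg (\<lambda>i. p i - q i) = deg p - deg q" by (simp add: deg_def sum_subtractf)
lemma deg_add: "deg (\<lambda>i. p i + q i) = deg p + deg q" by (simp add: deg_def sum.distrib)
lemma deg_ee: "j \<in> {1..n} \<Longrightarrow> deg (ee j) = 1" by (simp add: deg_def ee_def)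
lemma deg_ne: "j \<in> {1..n} \<Longrightarrow> deg (ne j) = -1" by (simp add: deg_def ne_def)
lemma cnt_cons: "cnt (j # w) = (\<lambda>i. ee j i + cnt w i)" by (auto simp: cnt_def ee_def)
lemma deg_cnt: "set w \<subseteq> {1..n} \<Longrightarrow> deg (cnt w) = int (length w)"
proof (induction w)
  case Nil then show ?case by (simp add: deg_def cnt_def)
next
  case (Cons j w) then show ?case using deg_ee[of j] by (simp add: cnt_cons deg_add)
qed

lemma TM_left_one:
  assumes F: "finite (supp F)"
  shows "TM (Bt q gone) F (p, h) = F (\<lambda>i. p i - q i, h)"
proof -
  let ?b0 = "((\<lambda>i. p i - q i), h)"
  have "TM (Bt q gone) F (p, h) = (\<Sum>a\<in>{(q, gone)}. \<Sum>b\<in>supp F. of_bool (Tcomb a b = (p, h)) * (Bt q gone a * F b * Tcoef a b))"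
    unfolding TM_def' by (rule tw_sum) (use F in \<open>auto simp: supp_basis\<close>)
  also have "\<dots> = (\<Sum>b\<in>supp F. if b = ?b0 then F b else 0)"
  proof (simp, rule sum.cong[OF refl])
    fix b assume "b \<in> supp F"
    obtain p' h' where b: "b = (p', h')" by fastforce
    have "(\<lambda>i. q i + p' i) = p \<longleftrightarrow> p' = (\<lambda>i. p i - q i)" by (simp add: fun_eq_iff eq_diff_eq add.commute)
    then show "of_bool (Tcomb (q, gone) b = (p, h)) * (basis_el (q, gone) (q, gone) * F b * Tcoef (q, gone) b) = (if b = ?b0 then F b else 0)"
      by (auto simp: b Tcomb_def Tcoef_def basis_el_def gmul_one alpha_one yact_one)
  qed
  also have "\<dots> = F ?b0" using F by (simp add: supp_def)
  finally show ?thesis .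
qed

lemma TM_left_nz:
  assumes "TM (Bt q k) F (p, h) \<noteq> 0"
  shows "\<exists>h'. F (\<lambda>i. p i - q i, h') \<noteq> 0"
proof -
  obtain a b where ab: "Bt q k a \<noteq> 0" "F b \<noteq> 0" "Tcomb a b = (p, h)"
    using tw_nz[of Tcomb Tcoef "Bt q k" F "(p, h)"] assms unfolding TM_def' by blast
  obtain p' h' where b: "b = (p', h')" by fastforce
  have a: "a = (q, k)" using ab(1) by (simp add: basis_el_def split: if_splits)
  have "p = (\<lambda>i. q i + p' i)" using ab(3) a b by (simp add: Tcomb_def)
  then have "p' = (\<lambda>i. p i - q i)" by auto
  then show ?thesis using ab(2) b by blast
qed

lemma TM_right_nz:
  assumes "TM F (Bt (\<lambda>_. 0) k) (p, h) \<noteq> 0"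
  shows "\<exists>h'. F (p, h') \<noteq> 0"
proof -
  obtain a b where ab: "F a \<noteq> 0" "Bt (\<lambda>_. 0) k b \<noteq> 0" "Tcomb a b = (p, h)"
    using tw_nz[of Tcomb Tcoef F "Bt (\<lambda>_. 0) k" "(p, h)"] assms unfolding TM_def' by blast
  obtain p' h' where a: "a = (p', h')" by fastforce
  have b: "b = ((\<lambda>_. 0), k)" using ab(2) by (simp add: basis_el_def split: if_splits)
  have "p = p'" using ab(3) a b by (auto simp: Tcomb_def)
  then show ?thesis using ab(1) a by blast
qed

lemma Xw_lead:
  "set w \<subseteq> {1..n} \<Longrightarrow> (\<forall>p h. Xw w (p, h) \<noteq> 0 \<longrightarrow> deg p \<le> int (length w))
     \<and> (\<forall>p h. deg p = int (length w) \<longrightarrow> Xw w (p, h) = (if p = cnt w \<and> h = gone then 1 else 0))"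
proof (induction w)
  case Nil
  have "deg (\<lambda>_. 0) = 0" by (simp add: deg_def)
  moreover have "cnt [] = (\<lambda>_. 0)" by (simp add: cnt_def)
  ultimately show ?case by (auto simp: tone_eq basis_el_def)
next
  case (Cons j w)
  have j: "j \<in> {1..n}" and w: "set w \<subseteq> {1..n}" using Cons.prems by auto
  note IH = Cons.IH[OF w]
  have X: "Xw w \<in> TA" using Xw_TA[OF w] .
  have Xf: "finite (supp (Xw w))" using X TA_fin by auto
  have ev: "TM (Tx j) (Xw w) (p, h) = Xw w (\<lambda>i. p i - ee j i, h) - cc j * TM (AA j) (Xw w) (p, h)" for p h
  proof -
    have "Xw (j # w) = (\<lambda>c. TM (aa j) (Xw w) c - cc j * TM (AA j) (Xw w) c)"
      unfolding Xw.simps Tx_aa[OF j] TM_diff_left[OF aa_TA[OF j] TA_scale[OF AA_TA[OF j]] X] TM_scale_left[OF AA_TA[OF j] X] ..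
    then show ?thesis by (simp add: aa_def TM_left_one[OF Xf])
  qed
  have ev': "Xw (j # w) (p, h) = Xw w (\<lambda>i. p i - ee j i, h) - cc j * TM (AA j) (Xw w) (p, h)" for p h
    using ev by simp
  have sec: "TM (AA j) (Xw w) (p, h) \<noteq> 0 \<Longrightarrow> deg p + 1 \<le> int (length w)" for p h
  proof -
    assume "TM (AA j) (Xw w) (p, h) \<noteq> 0"
    then obtain h' where "Xw w (\<lambda>i. p i - ne (succ_idx n j) i, h') \<noteq> 0"
      unfolding AA_def using TM_left_nz by blast
    then have "deg (\<lambda>i. p i - ne (succ_idx n j) i) \<le> int (length w)" using IH by blast
    then show ?thesis using deg_ne[OF succ_in[OF j]] by (simp add: deg_diff)
  qed
  have fst_: "Xw w (\<lambda>i. p i - ee j i, h) \<noteq> 0 \<Longrightarrow> deg p \<le> int (length w) + 1" for p h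
  proof -
    assume "Xw w (\<lambda>i. p i - ee j i, h) \<noteq> 0"
    then have "deg (\<lambda>i. p i - ee j i) \<le> int (length w)" using IH by blast
    then show ?thesis using deg_ee[OF j] by (simp add: deg_diff)
  qed
  show ?case
  proof (intro conjI allI impI)
    fix p h assume "Xw (j # w) (p, h) \<noteq> 0"
    then have "Xw w (\<lambda>i. p i - ee j i, h) - cc j * TM (AA j) (Xw w) (p, h) \<noteq> 0" using ev'[of p h] by (simp del: Xw.simps)
    then have "Xw w (\<lambda>i. p i - ee j i, h) \<noteq> 0 \<or> TM (AA j) (Xw w) (p, h) \<noteq> 0" by auto
    then show "deg p \<le> int (length (j # w))" using sec fst_ by fastforce
  next
    fix p h assume dp: "deg p = int (length (j # w))"
    then have "TM (AA j) (Xw w) (p, h) = 0" using sec by fastforce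
    then have "Xw (j # w) (p, h) = Xw w (\<lambda>i. p i - ee j i, h)" using ev'[of p h] by simp
    also have "\<dots> = (if (\<lambda>i. p i - ee j i) = cnt w \<and> h = gone then 1 else 0)"
      using IH dp deg_ee[OF j] by (simp add: deg_diff)
    also have "(\<lambda>i. p i - ee j i) = cnt w \<longleftrightarrow> p = cnt (j # w)"
      by (auto simp: cnt_cons fun_eq_iff algebra_simps)
    finally show "Xw (j # w) (p, h) = (if p = cnt (j # w) \<and> h = gone then 1 else 0)" .
  qed
qed

lemma Tb_nz: assumes "(w, g) \<in> Sbasis n l" "Tb (w, g) (p, h) \<noteq> 0" shows "deg p \<le> int (length w)"
proof -
  have w: "set w \<subseteq> {1..n}" using assms by (simp add: Sbasis_iff)
  obtain h' where "Xw w (p, h') \<noteq> 0" using TM_right_nz assms(2) by (fastforce simp: Tb_def tg_eq)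
  then show ?thesis using Xw_lead[OF w] by blast
qed

lemma Tb_top: assumes b: "(w, g) \<in> Sbasis n l" and dp: "deg p = int (length w)"
  shows "Tb (w, g) (p, h) = (if p = cnt w \<and> h = g then 1 else 0)"
proof -
  have w: "set w \<subseteq> {1..n}" and G: "g \<in> G" using b by (auto simp: Sbasis_iff)
  have X: "Xw w \<in> TA" using Xw_TA[OF w] .
  have Xf: "finite (supp (Xw w))" using X TA_fin by auto
  let ?a0 = "(cnt w, gone)"
  have "Tb (w, g) (p, h) = (\<Sum>a\<in>supp (Xw w). \<Sum>b\<in>{((\<lambda>_. 0), g)}. of_bool (Tcomb a b = (p, h)) * (Xw w a * tg g b * Tcoef a b))"
    unfolding Tb_def fst_conv snd_conv TM_def' by (rule tw_sum) (use Xf in \<open>auto simp: tg_eq supp_basis\<close>)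
  also have "\<dots> = (\<Sum>a\<in>supp (Xw w). if a = ?a0 then of_bool (Tcomb ?a0 ((\<lambda>_. 0), g) = (p, h)) else 0)"
  proof (rule sum.cong[OF refl])
    fix a assume a: "a \<in> supp (Xw w)"
    obtain p' h' where a': "a = (p', h')" by fastforce
    show "(\<Sum>b\<in>{((\<lambda>_. 0), g)}. of_bool (Tcomb a b = (p, h)) * (Xw w a * tg g b * Tcoef a b))
        = (if a = ?a0 then of_bool (Tcomb ?a0 ((\<lambda>_. 0), g) = (p, h)) else 0)"
    proof (cases "p' = p")
      case True
      then have "Xw w a = (if p' = cnt w \<and> h' = gone then 1 else 0)" using Xw_lead[OF w] dp a' by blast
      then show ?thesis using a' a
        by (auto simp: supp_def tg_eq basis_el_def Tcoef_def alpha_one yact_zero)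
    next
      case False
      then have "Tcomb a ((\<lambda>_. 0), g) \<noteq> (p, h)" by (simp add: a' Tcomb_def)
      moreover have "a \<noteq> ?a0 \<or> Tcomb ?a0 ((\<lambda>_. 0), g) \<noteq> (p, h)"
        using False a' by (auto simp: Tcomb_def)
      ultimately show ?thesis by auto
    qed
  qed
  also have "\<dots> = (if ?a0 \<in> supp (Xw w) then of_bool (Tcomb ?a0 ((\<lambda>_. 0), g) = (p, h)) else 0)"
    using Xf by simp
  also have "\<dots> = (if p = cnt w \<and> h = g then 1 else 0)"
  proof -
    have "Xw w ?a0 = 1" using Xw_lead[OF w] deg_cnt[OF w] by simp
    then show ?thesis by (auto simp: supp_def Tcomb_def gmul_one)
  qed
  finally show ?thesis .
qed
end



context PT
begin

abbreviation SA where "SA \<equiv> Salg n l"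
abbreviation SM where "SM \<equiv> smul n l z"
abbreviation Bs :: "nat list \<Rightarrow> (nat \<Rightarrow> complex) \<Rightarrow> nat list \<times> (nat \<Rightarrow> complex) \<Rightarrow> complex"
  where "Bs w g \<equiv> basis_el (w, g)"
abbreviation Hid where "Hid \<equiv> Hideal n l z t"

definition Scomb :: "nat list \<times> (nat \<Rightarrow> complex) \<Rightarrow> nat list \<times> (nat \<Rightarrow> complex) \<Rightarrow> nat list \<times> (nat \<Rightarrow> complex)"
  where "Scomb = (\<lambda>(w, g) (w', h). (w @ w', gmul g h))"
definition Scoef :: "nat list \<times> (nat \<Rightarrow> complex) \<Rightarrow> nat list \<times> (nat \<Rightarrow> complex) \<Rightarrow> complex"
  where "Scoef = (\<lambda>(w, g) (w', h). alpha n l z g h * xact g w')"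

lemma SM_def': "SM = tw_mult Scomb Scoef" by (simp add: smul_def Scomb_def Scoef_def)

lemma SA_iff: "F \<in> SA \<longleftrightarrow> finite (supp F) \<and> supp F \<subseteq> Sbasis n l"
  by (simp add: Salg_def fin_supp_on_def supp_def)
lemma SA_fin: "F \<in> SA \<Longrightarrow> finite (supp F)" by (simp add: SA_iff)

lemma SM_basis: "SM (Bs w g) (Bs w' h) = (\<lambda>c. alpha n l z g h * xact g w' * Bs (w @ w') (gmul g h) c)"
  by (rule ext) (simp add: SM_def' tw_basis Scomb_def Scoef_def)

lemma Scomb_basis: "a \<in> Sbasis n l \<Longrightarrow> b \<in> Sbasis n l \<Longrightarrow> Scomb a b \<in> Sbasis n l"
  by (cases a; cases b) (auto simp: Scomb_def Sbasis_iff gmul_G)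

lemma SM_closed: assumes "F \<in> SA" "H \<in> SA" shows "SM F H \<in> SA"
proof -
  have "supp (SM F H) \<subseteq> (\<lambda>(a,b). Scomb a b) ` (supp F \<times> supp H)"
    unfolding SM_def' by (rule tw_supp)
  moreover have "(\<lambda>(a,b). Scomb a b) ` (supp F \<times> supp H) \<subseteq> Sbasis n l"
    using assms Scomb_basis by (force simp: SA_iff)
  moreover have "finite ((\<lambda>(a,b). Scomb a b) ` (supp F \<times> supp H))" using assms by (simp add: SA_iff)
  ultimately show ?thesis by (meson SA_iff finite_subset subset_trans)
qed

lemma SA_lin: "F \<in> SA \<Longrightarrow> H \<in> SA \<Longrightarrow> (\<lambda>y. a * F y + b * H y) \<in> SA"
  unfolding SA_iff using supp_lin[of a F b H] fin_lin[of F H a b] by blast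
lemma SA_diff: "F \<in> SA \<Longrightarrow> H \<in> SA \<Longrightarrow> (\<lambda>y. F y - H y) \<in> SA"
  unfolding SA_iff using supp_diff[of F H] fin_diff[of F H] by blast
lemma SA_scale: "F \<in> SA \<Longrightarrow> (\<lambda>y. a * F y) \<in> SA"
  unfolding SA_iff using supp_scale[of a F] fin_scale[of F a] by blast
lemma SA_zero: "(\<lambda>_. 0) \<in> SA" by (simp add: SA_iff supp_def)
lemma SA_basis: "b \<in> Sbasis n l \<Longrightarrow> basis_el b \<in> SA" by (simp add: SA_iff supp_basis)
lemma SA_Bs: "set w \<subseteq> {1..n} \<Longrightarrow> g \<in> G \<Longrightarrow> Bs w g \<in> SA" by (simp add: SA_basis Sbasis_iff)

lemma SM_diff_left: "F \<in> SA \<Longrightarrow> H \<in> SA \<Longrightarrow> K \<in> SA \<Longrightarrow> SM (\<lambda>y. F y - H y) K = (\<lambda>c. SM F K c - SM H K c)"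
  unfolding SM_def' by (rule ext, rule tw_diff_left) (auto simp: SA_iff)
lemma SM_diff_right: "F \<in> SA \<Longrightarrow> H \<in> SA \<Longrightarrow> K \<in> SA \<Longrightarrow> SM K (\<lambda>y. F y - H y) = (\<lambda>c. SM K F c - SM K H c)"
  unfolding SM_def' by (rule ext, rule tw_diff_right) (auto simp: SA_iff)
lemma SM_scale_left: "F \<in> SA \<Longrightarrow> K \<in> SA \<Longrightarrow> SM (\<lambda>y. a * F y) K = (\<lambda>c. a * SM F K c)"
  unfolding SM_def' by (rule ext, rule tw_scale_left) (auto simp: SA_iff)
lemma SM_scale_right: "F \<in> SA \<Longrightarrow> K \<in> SA \<Longrightarrow> SM K (\<lambda>y. a * F y) = (\<lambda>c. a * SM K F c)"
  unfolding SM_def' by (rule ext, rule tw_scale_right) (auto simp: SA_iff)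

lemma xact_one: "xact gone w = 1" by (induction w) (auto simp: xact_def gone_def)

subsection \<open>The map Theta\<close>

definition Th :: "(nat list \<times> (nat \<Rightarrow> complex) \<Rightarrow> complex) \<Rightarrow> (nat \<Rightarrow> int) \<times> (nat \<Rightarrow> complex) \<Rightarrow> complex"
  where "Th a = (\<lambda>y. \<Sum>b\<in>supp a. a b * Tb b y)"

lemma Th_sup: assumes "finite A" "supp a \<subseteq> A" shows "Th a = (\<lambda>y. \<Sum>b\<in>A. a b * Tb b y)"
  unfolding Th_def
  by (rule ext, rule sum.mono_neutral_left) (use assms in \<open>auto simp: supp_def\<close>)

lemma Th_lin: assumes "finite (supp a)" "finite (supp b)"
  shows "Th (\<lambda>x. c1 * a x + c2 * b x) = (\<lambda>y. c1 * Th a y + c2 * Th b y)"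
proof -
  have f: "finite (supp a \<union> supp b)" using assms by auto
  show ?thesis
    unfolding Th_sup[OF f supp_lin] Th_sup[OF f Un_upper1] Th_sup[OF f Un_upper2]
    by (simp add: algebra_simps sum.distrib sum_distrib_left)
qed

lemma Th_diff: "finite (supp a) \<Longrightarrow> finite (supp b) \<Longrightarrow> Th (\<lambda>x. a x - b x) = (\<lambda>y. Th a y - Th b y)"
  using Th_lin[of a b 1 "-1"] by simp
lemma Th_scale: "finite (supp a) \<Longrightarrow> Th (\<lambda>x. c * a x) = (\<lambda>y. c * Th a y)"
  using Th_lin[of a a c 0] by simp
lemma Th_zero: "Th (\<lambda>_. 0) = (\<lambda>_. 0)" by (simp add: Th_def supp_def)

lemma Th_basis: "Th (basis_el b) = Tb b"
  unfolding Th_def supp_basis by (simp add: basis_el_def)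

lemma Th_TA: assumes "a \<in> SA" shows "Th a \<in> TA"
  unfolding Th_def using assms
  by (intro TA_sum TA_scale Tb_TA) (auto simp: SA_iff)

lemma Tb_mult': assumes "x \<in> Sbasis n l" "y \<in> Sbasis n l"
  shows "TM (Tb x) (Tb y) = (\<lambda>v. Scoef x y * Tb (Scomb x y) v)"
proof -
  obtain w g where x: "x = (w, g)" by fastforce
  obtain w' h where y: "y = (w', h)" by fastforce
  show ?thesis using Tb_mult[of w g w' h] assms by (simp add: x y Scoef_def Scomb_def)
qed

lemma Th_mult: assumes a: "a \<in> SA" and b: "b \<in> SA" shows "Th (SM a b) = TM (Th a) (Th b)"
proof
  fix v
  let ?A = "supp a" and ?B = "supp b"
  let ?C = "(\<lambda>(x,y). Scomb x y) ` (?A \<times> ?B)"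
  have fA: "finite ?A" "finite ?B" using a b SA_fin by auto
  have sA: "?A \<subseteq> Sbasis n l" "?B \<subseteq> Sbasis n l" using a b by (auto simp: SA_iff)
  have fC: "finite ?C" using fA by auto
  have SMf: "SM a b c = (\<Sum>x\<in>?A. \<Sum>y\<in>?B. of_bool (Scomb x y = c) * (a x * b y * Scoef x y))" for c
    unfolding SM_def' by (rule tw_sum[OF fA(1) fA(2) subset_refl subset_refl])
  have sC: "supp (SM a b) \<subseteq> ?C" unfolding SM_def' by (rule tw_supp)
  have "Th (SM a b) v = (\<Sum>c\<in>?C. SM a b c * Tb c v)"
    unfolding Th_sup[OF fC sC] ..
  also have "\<dots> = (\<Sum>c\<in>?C. Tb c v * (\<Sum>x\<in>?A. \<Sum>y\<in>?B. of_bool (Scomb x y = c) * (a x * b y * Scoef x y)))"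
    by (simp add: SMf mult.commute)
  also have "\<dots> = (\<Sum>x\<in>?A. \<Sum>y\<in>?B. Tb (Scomb x y) v * (a x * b y * Scoef x y))"
    by (rule collapse) (use fA fC in auto)
  also have "\<dots> = (\<Sum>x\<in>?A. \<Sum>y\<in>?B. a x * b y * TM (Tb x) (Tb y) v)"
    apply (intro sum.cong refl)
    subgoal for x y
    proof -
      assume xy: "x \<in> ?A" "y \<in> ?B"
      have "x \<in> Sbasis n l" "y \<in> Sbasis n l" using xy sA by auto
      then have "TM (Tb x) (Tb y) v = Scoef x y * Tb (Scomb x y) v" using Tb_mult'[of x y] by simp
      then show ?thesis by (simp add: mult_ac)
    qed
    done
  also have "\<dots> = (\<Sum>x\<in>?A. \<Sum>y\<in>?B. TM (\<lambda>u. a x * Tb x u) (\<lambda>u. b y * Tb y u) v)"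
    apply (intro sum.cong refl)
    subgoal for x y
    proof -
      assume xy: "x \<in> ?A" "y \<in> ?B"
      have t: "Tb x \<in> TA" "Tb y \<in> TA" using Tb_TA sA xy by blast+
      show ?thesis
        unfolding TM_scale_left[OF t(1) TA_scale[OF t(2)]] TM_scale_right[OF t(2) t(1)] by (simp add: mult_ac)
    qed
    done
  also have "\<dots> = (\<Sum>x\<in>?A. TM (\<lambda>u. a x * Tb x u) (Th b) v)"
    unfolding Th_def TM_def'
    apply (intro sum.cong refl)
    subgoal for x
    proof -
      assume x: "x \<in> ?A"
      have "finite (supp (\<lambda>u. a x * Tb x u))" using Tb_TA[of x] sA x TA_fin TA_scale by blast
      moreover have "\<And>y. y \<in> ?B \<Longrightarrow> finite (supp (\<lambda>u. b y * Tb y u))" using Tb_TA sA TA_fin TA_scale by blast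
      ultimately show ?thesis by (intro tw_sum_right[symmetric] fA)
    qed
    done
  also have "\<dots> = TM (Th a) (Th b) v"
    unfolding Th_def[of a] TM_def'
  proof (rule tw_sum_left[symmetric])
    show "finite ?A" by (rule fA)
    show "\<And>x. x \<in> ?A \<Longrightarrow> finite (supp (\<lambda>u. a x * Tb x u))" using Tb_TA sA TA_fin TA_scale by blast
    show "finite (supp (Th b))" using Th_TA[OF b] TA_fin by blast
  qed
  finally show "Th (SM a b) v = TM (Th a) (Th b) v" .
qed


definition clJ where "clJ J \<longleftrightarrow> Hrels n l z t \<subseteq> J \<and> J \<subseteq> SA \<and> (\<lambda>_. 0) \<in> J
      \<and> (\<forall>a\<in>J. \<forall>b\<in>J. (\<lambda>x. a x + b x) \<in> J)
      \<and> (\<forall>c. \<forall>a\<in>J. (\<lambda>x. c * a x) \<in> J)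
      \<and> (\<forall>a\<in>SA. \<forall>j\<in>J. SM a j \<in> J \<and> SM j a \<in> J)"

lemma Hid_eq: "Hid = \<Inter>{J. clJ J}"
  unfolding Hideal_def ideal_gen_def clJ_def ..

lemma Hid_mem: "x \<in> Hid \<longleftrightarrow> (\<forall>J. clJ J \<longrightarrow> x \<in> J)"
  unfolding Hid_eq by (simp only: Inter_iff Ball_def mem_Collect_eq)

lemma Hid_zero: "(\<lambda>_. 0) \<in> Hid" unfolding Hid_mem clJ_def by (intro allI impI) (elim conjE)
lemma Hid_add: assumes "a \<in> Hid" "b \<in> Hid" shows "(\<lambda>x. a x + b x) \<in> Hid"
  unfolding Hid_mem
proof (intro allI impI)
  fix J assume J: "clJ J"
  then have "a \<in> J" "b \<in> J" using assms unfolding Hid_mem by auto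
  then show "(\<lambda>x. a x + b x) \<in> J" using J unfolding clJ_def by (elim conjE) blast
qed
lemma Hid_scale: assumes "a \<in> Hid" shows "(\<lambda>x. c * a x) \<in> Hid"
  unfolding Hid_mem
proof (intro allI impI)
  fix J assume J: "clJ J"
  then have "a \<in> J" using assms unfolding Hid_mem by auto
  then show "(\<lambda>x. c * a x) \<in> J" using J unfolding clJ_def by (elim conjE) blast
qed
lemma Hid_multL: assumes "a \<in> SA" "j \<in> Hid" shows "SM a j \<in> Hid"
  unfolding Hid_mem
proof (intro allI impI)
  fix J assume J: "clJ J"
  then have "j \<in> J" using assms unfolding Hid_mem by auto
  then show "SM a j \<in> J" using J assms(1) unfolding clJ_def by (elim conjE) blast
qed
lemma Hid_multR: assumes "a \<in> SA" "j \<in> Hid" shows "SM j a \<in> Hid"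
  unfolding Hid_mem
proof (intro allI impI)
  fix J assume J: "clJ J"
  then have "j \<in> J" using assms unfolding Hid_mem by auto
  then show "SM j a \<in> J" using J assms(1) unfolding clJ_def by (elim conjE) blast
qed
lemma Hid_rels: assumes "x \<in> Hrels n l z t" shows "x \<in> Hid"
  unfolding Hid_mem
proof (intro allI impI)
  fix J assume J: "clJ J"
  then show "x \<in> J" using assms unfolding clJ_def by (elim conjE) blast
qed

lemma Hid_sub: assumes "clJ J" shows "Hid \<subseteq> J"
proof
  fix x assume "x \<in> Hid" then show "x \<in> J" using assms unfolding Hid_mem by blast
qed

lemma SM_sx: "SM (sx i) (sx j) = Bs [i, j] gone"
  by (simp add: sx_def SM_basis alpha_one xact_one gmul_one)

definition rel1 where "rel1 i = (\<lambda>x. Bs [i, succ_idx n i] gone x - Bs [succ_idx n i, i] gone x - t i * Bs [] (gen n z i) x)"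
definition rel2 where "rel2 i j = (\<lambda>x. Bs [i, j] gone x - Bs [j, i] gone x)"

lemma rel1_in: "i \<in> {1..n} \<Longrightarrow> rel1 i \<in> Hrels n l z t"
  unfolding Hrels_def rel1_def fdiff_def SM_sx sg_def by blast

lemma rel2_in: "i \<in> {1..n} \<Longrightarrow> j \<in> {1..n} \<Longrightarrow> idx_dist i j \<notin> {1, n - 1} \<Longrightarrow> rel2 i j \<in> Hrels n l z t"
  unfolding Hrels_def rel2_def fdiff_def SM_sx by blast

lemma Hrels_cases: "x \<in> Hrels n l z t \<Longrightarrow>
   (\<exists>i\<in>{1..n}. x = rel1 i) \<or> (\<exists>i\<in>{1..n}. \<exists>j\<in>{1..n}. idx_dist i j \<notin> {1, n - 1} \<and> x = rel2 i j)"
  unfolding Hrels_def rel1_def rel2_def fdiff_def SM_sx sg_def by blast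

lemma rel1_SA: "i \<in> {1..n} \<Longrightarrow> rel1 i \<in> SA"
  unfolding rel1_def using succ_in[of i]
  by (intro SA_diff SA_scale SA_Bs gone_G gen_G) auto

lemma rel2_SA: "i \<in> {1..n} \<Longrightarrow> j \<in> {1..n} \<Longrightarrow> rel2 i j \<in> SA"
  unfolding rel2_def by (intro SA_diff SA_Bs gone_G) auto

lemma Hrels_SA: "Hrels n l z t \<subseteq> SA"
  using Hrels_cases rel1_SA rel2_SA by blast

lemma tg_one: "tg gone = tone" by (simp add: tg_def tone_def)

lemma Th_pair: "i \<in> {1..n} \<Longrightarrow> j \<in> {1..n} \<Longrightarrow> Th (Bs [i, j] gone) = TM (Tx i) (Tx j)"
  unfolding Th_basis Tb_def fst_conv snd_conv tg_one
  by (simp add: TM_one_right Tx_TA TM_closed tone_TA)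

lemma Th_g: "g \<in> G \<Longrightarrow> Th (Bs [] g) = tg g"
  unfolding Th_basis Tb_def fst_conv snd_conv by (simp add: TM_one_left tg_TA)

lemma z_ne1: "z \<noteq> 1" using prim[rule_format, of 1] l2 by auto

lemma succ_succ: "i \<in> {1..n} \<Longrightarrow> succ_idx n (succ_idx n i) \<noteq> i"
  using n3 unfolding succ_idx_def by auto

lemma ee_ne: "(\<lambda>k. ee j k + ne j k) = (\<lambda>_. 0)" by (auto simp: ee_def ne_def)

lemma Th_rel1: assumes i: "i \<in> {1..n}" shows "Th (rel1 i) = (\<lambda>_. 0)"
proof -
  let ?j = "succ_idx n i"
  have j: "?j \<in> {1..n}" using succ_in[OF i] .
  have f: "finite (supp (Bs [i, ?j] gone))" "finite (supp (Bs [?j, i] gone))" "finite (supp (Bs [] (gen n z i)))"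
    by (simp_all add: supp_basis)
  have g1: "gen n z ?j i = 1" using succ_ne[OF i] succ_succ[OF i] gen_val[OF j i] by auto
  have g2: "gen n z i ?j = inverse z" using succ_ne[OF i] gen_val[OF i j] by auto
  have ccv: "cc i - t i - inverse z * cc i = 0"
  proof -
    have "z - 1 \<noteq> 0" using z_ne1 by simp
    then show ?thesis using z_nz by (simp add: cc_def field_simps)
  qed
  have "Th (rel1 i) = (\<lambda>y. TM (Tx i) (Tx ?j) y - TM (Tx ?j) (Tx i) y - t i * tg (gen n z i) y)"
    unfolding rel1_def
    by (simp add: Th_diff Th_scale f fin_diff fin_scale Th_pair[OF i j] Th_pair[OF j i] Th_g gen_G[OF i])
  also have "\<dots> = (\<lambda>y. (cc i - t i - inverse z * cc i) * tg (gen n z i) y)"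
    unfolding Tx_comm[OF i j] g1 g2 ee_ne tg_eq[symmetric]
    by (auto simp: algebra_simps)
  also have "\<dots> = (\<lambda>_. 0)" unfolding ccv by simp
  finally show ?thesis .
qed

lemma idx_adj: assumes "i \<in> {1..n}" "j \<in> {1..n}" "idx_dist i j \<notin> {1, n - 1}"
  shows "j \<noteq> succ_idx n i" "i \<noteq> succ_idx n j"
  using assms n3 unfolding idx_dist_def succ_idx_def by (auto split: if_splits)

lemma Th_rel2: assumes i: "i \<in> {1..n}" and j: "j \<in> {1..n}" and d: "idx_dist i j \<notin> {1, n - 1}"
  shows "Th (rel2 i j) = (\<lambda>_. 0)"
proof (cases "i = j")
  case True then show ?thesis by (simp add: rel2_def Th_zero)
next
  case False
  have g1: "gen n z j i = 1" using idx_adj[OF i j d] False gen_val[OF j i] by auto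
  have g2: "gen n z i j = 1" using idx_adj[OF i j d] False gen_val[OF i j] by auto
  have f: "finite (supp (Bs [i, j] gone))" "finite (supp (Bs [j, i] gone))" by (simp_all add: supp_basis)
  show ?thesis
    unfolding rel2_def Th_diff[OF f] Th_pair[OF i j] Th_pair[OF j i] Tx_comm[OF i j] g1 g2 by simp
qed

lemma Hid_ker: "a \<in> Hid \<Longrightarrow> a \<in> SA \<and> Th a = (\<lambda>_. 0)"
proof -
  let ?K = "{a \<in> SA. Th a = (\<lambda>_. 0)}"
  have "Hid \<subseteq> ?K"
  proof (rule Hid_sub, unfold clJ_def, intro conjI)
    show "Hrels n l z t \<subseteq> ?K"
      using Hrels_cases Hrels_SA Th_rel1 Th_rel2 by blast
    show "?K \<subseteq> SA" by blast
    show "(\<lambda>_. 0) \<in> ?K" using SA_zero Th_zero by blast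
    show "\<forall>a\<in>?K. \<forall>b\<in>?K. (\<lambda>x. a x + b x) \<in> ?K"
    proof (intro ballI)
      fix a b assume "a \<in> ?K" "b \<in> ?K"
      then show "(\<lambda>x. a x + b x) \<in> ?K"
        using SA_lin[of a b 1 1] Th_lin[of a b 1 1] SA_fin by auto
    qed
    show "\<forall>c. \<forall>a\<in>?K. (\<lambda>x. c * a x) \<in> ?K"
      using SA_scale Th_scale SA_fin by auto
    show "\<forall>a\<in>SA. \<forall>j\<in>?K. SM a j \<in> ?K \<and> SM j a \<in> ?K"
      using SM_closed Th_mult TM_zero_left TM_zero_right by auto
  qed
  then show "a \<in> Hid \<Longrightarrow> a \<in> SA \<and> Th a = (\<lambda>_. 0)" by blast
qed

subsection \<open>Spanning by sorted words\<close>

definition SS where "SS = {s \<in> SA. \<forall>w g. s (w, g) \<noteq> 0 \<longrightarrow> sorted w}"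

lemma SS_lin: assumes "s1 \<in> SS" "s2 \<in> SS" shows "(\<lambda>x. a * s1 x + b * s2 x) \<in> SS"
proof -
  have A: "(\<lambda>x. a * s1 x + b * s2 x) \<in> SA" using assms SA_lin[of s1 s2 a b] by (simp add: SS_def)
  have "sorted w" if "a * s1 (w, g) + b * s2 (w, g) \<noteq> 0" for w g
  proof -
    have "s1 (w, g) \<noteq> 0 \<or> s2 (w, g) \<noteq> 0" using that by auto
    then show ?thesis using assms unfolding SS_def by blast
  qed
  then show ?thesis using A unfolding SS_def by blast
qed

lemma SS_zero: "(\<lambda>_. 0) \<in> SS" unfolding SS_def using SA_zero by auto

lemma SS_Bs: "sorted w \<Longrightarrow> set w \<subseteq> {1..n} \<Longrightarrow> g \<in> G \<Longrightarrow> Bs w g \<in> SS"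
  unfolding SS_def using SA_Bs by (auto simp: basis_el_def)

fun nu :: "nat list \<Rightarrow> nat" where
  "nu [] = 0"
| "nu (x # xs) = x * Suc (length xs) + nu xs"

lemma nu_swap: assumes "b < a" shows "nu (u @ [b, a] @ v) < nu (u @ [a, b] @ v)"
proof (induction u)
  case Nil
  let ?L = "length v"
  have "b * Suc (Suc ?L) + a * Suc ?L = b * Suc ?L + a * Suc ?L + b" by simp
  moreover have "a * Suc (Suc ?L) + b * Suc ?L = a * Suc ?L + b * Suc ?L + a" by simp
  ultimately show ?case using assms by simp
next
  case (Cons x u) then show ?case by simp
qed

lemma unsorted: "\<not> sorted w \<Longrightarrow> \<exists>u a b v. w = u @ [a, b] @ v \<and> b < (a::nat)"
proof (induction w)
  case Nil then show ?case by simp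
next
  case (Cons x xs)
  show ?case
  proof (cases xs)
    case Nil then show ?thesis using Cons by simp
  next
    case (Cons y ys)
    show ?thesis
    proof (cases "y < x")
      case True then show ?thesis using Cons by (intro exI[of _ "[]"]) auto
    next
      case False
      have e: "sorted (x # y # ys) = (x \<le> y \<and> sorted (y # ys))" by (rule sorted2)
      have "x \<le> y" using False by simp
      then have "\<not> sorted xs" using Cons \<open>\<not> sorted (x # xs)\<close> e by blast
      then obtain u a b v where "xs = u @ [a, b] @ v" "b < a" using \<open>\<not> sorted xs \<Longrightarrow> _\<close> by blast
      then show ?thesis by (intro exI[of _ "x # u"]) auto
    qed
  qed
qed

lemma sandwich:
  assumes u: "set u \<subseteq> {1..n}" and p: "set p \<subseteq> {1..n}" and q: "set q \<subseteq> {1..n}" and v: "set v \<subseteq> {1..n}"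
    and g: "g \<in> G" and k: "k \<in> G"
  shows "SM (Bs u gone) (SM (\<lambda>x. Bs p gone x - Bs q gone x - \<tau> * Bs [] k x) (Bs v g))
       = (\<lambda>x. Bs (u @ p @ v) g x - Bs (u @ q @ v) g x - (\<tau> * alpha n l z k g * xact k v) * Bs (u @ v) (gmul k g) x)"
proof -
  have m: "Bs p gone \<in> SA" "Bs q gone \<in> SA" "Bs [] k \<in> SA" "Bs v g \<in> SA" "Bs u gone \<in> SA"
    "Bs (p @ v) g \<in> SA" "Bs (q @ v) g \<in> SA" "Bs v (gmul k g) \<in> SA"
  proof -
    have sets: "set (p @ v) \<subseteq> {1..n}" "set (q @ v) \<subseteq> {1..n}" "set [] \<subseteq> {1..n}" using p q v by auto
    show "Bs p gone \<in> SA" "Bs q gone \<in> SA" "Bs [] k \<in> SA" "Bs v g \<in> SA" "Bs u gone \<in> SA"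
      "Bs (p @ v) g \<in> SA" "Bs (q @ v) g \<in> SA" "Bs v (gmul k g) \<in> SA"
      using SA_Bs[OF p gone_G] SA_Bs[OF q gone_G] SA_Bs[OF sets(3) k] SA_Bs[OF v g] SA_Bs[OF u gone_G]
        SA_Bs[OF sets(1) g] SA_Bs[OF sets(2) g] SA_Bs[OF v gmul_G[OF k g]] by auto
  qed
  have m2: "(\<lambda>x. Bs p gone x - Bs q gone x) \<in> SA" "(\<lambda>x. \<tau> * Bs [] k x) \<in> SA"
    using m SA_diff SA_scale by auto
  have "SM (\<lambda>x. Bs p gone x - Bs q gone x - \<tau> * Bs [] k x) (Bs v g)
      = (\<lambda>c. SM (Bs p gone) (Bs v g) c - SM (Bs q gone) (Bs v g) c - \<tau> * SM (Bs [] k) (Bs v g) c)"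
    unfolding SM_diff_left[OF m2 m(4)] SM_diff_left[OF m(1) m(2) m(4)] SM_scale_left[OF m(3) m(4)] ..
  also have "\<dots> = (\<lambda>c. Bs (p @ v) g c - Bs (q @ v) g c - (\<tau> * alpha n l z k g * xact k v) * Bs v (gmul k g) c)"
    by (simp add: SM_basis alpha_one xact_one gmul_one mult.assoc)
  finally have e1: "SM (\<lambda>x. Bs p gone x - Bs q gone x - \<tau> * Bs [] k x) (Bs v g) = \<dots>" .
  have m3: "(\<lambda>c. Bs (p @ v) g c - Bs (q @ v) g c) \<in> SA" "(\<lambda>c. (\<tau> * alpha n l z k g * xact k v) * Bs v (gmul k g) c) \<in> SA"
    using m SA_diff SA_scale by auto
  have "SM (Bs u gone) (\<lambda>c. Bs (p @ v) g c - Bs (q @ v) g c - (\<tau> * alpha n l z k g * xact k v) * Bs v (gmul k g) c)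
     = (\<lambda>c. SM (Bs u gone) (Bs (p @ v) g) c - SM (Bs u gone) (Bs (q @ v) g) c - (\<tau> * alpha n l z k g * xact k v) * SM (Bs u gone) (Bs v (gmul k g)) c)"
    unfolding SM_diff_right[OF m3 m(5)] SM_diff_right[OF m(6) m(7) m(5)] SM_scale_right[OF m(8) m(5)] ..
  also have "\<dots> = (\<lambda>x. Bs (u @ p @ v) g x - Bs (u @ q @ v) g x - (\<tau> * alpha n l z k g * xact k v) * Bs (u @ v) (gmul k g) x)"
    by (simp add: SM_basis alpha_one xact_one gmul_one)
  finally show ?thesis using e1 by simp
qed

lemma rel_ab:
  assumes a: "a \<in> {1..n}" and b: "b \<in> {1..n}" and ba: "b < a"
  shows "\<exists>\<tau> k. k \<in> G \<and> (\<lambda>x. Bs [a, b] gone x - Bs [b, a] gone x - \<tau> * Bs [] k x) \<in> Hid"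
proof -
  consider (adj) "a = b + 1" | (wrap) "a = n" "b = 1" | (far) "a \<noteq> b + 1" "\<not> (a = n \<and> b = 1)" by blast
  then show ?thesis
  proof cases
    case adj
    have bn: "b \<noteq> n" using adj a by simp
    have s: "succ_idx n b = a" using adj bn by (simp add: succ_idx_def)
    have h: "(\<lambda>x. (-1) * rel1 b x) \<in> Hid" using Hid_scale[OF Hid_rels[OF rel1_in[OF b]]] .
    have e: "(\<lambda>x. (-1) * rel1 b x) = (\<lambda>x. Bs [a, b] gone x - Bs [b, a] gone x - (- t b) * Bs [] (gen n z b) x)"
      unfolding rel1_def s by (rule ext) (simp add: algebra_simps)
    have "(\<lambda>x. Bs [a, b] gone x - Bs [b, a] gone x - (- t b) * Bs [] (gen n z b) x) \<in> Hid"
      using h unfolding e .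
    then show ?thesis using gen_G[OF b] by blast
  next
    case wrap
    have s: "succ_idx n a = b" using wrap by (simp add: succ_idx_def)
    have "rel1 a \<in> Hid" using Hid_rels[OF rel1_in[OF a]] .
    then have "(\<lambda>x. Bs [a, b] gone x - Bs [b, a] gone x - t a * Bs [] (gen n z a) x) \<in> Hid"
      unfolding rel1_def s .
    then show ?thesis using gen_G[OF a] by blast
  next
    case far
    have d: "idx_dist a b = a - b" using ba by (simp add: idx_dist_def)
    have "a - b \<noteq> 1" using far ba by simp
    moreover have "a - b \<noteq> n - 1" using far ba a b by auto
    ultimately have "idx_dist a b \<notin> {1, n - 1}" using d by simp
    then have "rel2 a b \<in> Hid" using Hid_rels[OF rel2_in[OF a b]] by blast
    then have "(\<lambda>x. Bs [a, b] gone x - Bs [b, a] gone x - 0 * Bs [] gone x) \<in> Hid"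
      unfolding rel2_def by simp
    then show ?thesis using gone_G by blast
  qed
qed

lemma swap_step:
  assumes w: "set (u @ [a, b] @ v) \<subseteq> {1..n}" and g: "g \<in> G" and ba: "b < a"
  shows "\<exists>\<kappa> g2. g2 \<in> G \<and> (\<lambda>x. Bs (u @ [a, b] @ v) g x - Bs (u @ [b, a] @ v) g x - \<kappa> * Bs (u @ v) g2 x) \<in> Hid"
proof -
  have ab: "a \<in> {1..n}" "b \<in> {1..n}" and uv: "set u \<subseteq> {1..n}" "set v \<subseteq> {1..n}" using w by auto
  obtain \<tau> k where k: "k \<in> G" and R: "(\<lambda>x. Bs [a, b] gone x - Bs [b, a] gone x - \<tau> * Bs [] k x) \<in> Hid"
    using rel_ab[OF ab ba] by blast
  have "SM (Bs u gone) (SM (\<lambda>x. Bs [a, b] gone x - Bs [b, a] gone x - \<tau> * Bs [] k x) (Bs v g)) \<in> Hid"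
    by (intro Hid_multL Hid_multR R SA_Bs uv g gone_G)
  then have "(\<lambda>x. Bs (u @ [a, b] @ v) g x - Bs (u @ [b, a] @ v) g x - (\<tau> * alpha n l z k g * xact k v) * Bs (u @ v) (gmul k g) x) \<in> Hid"
    using sandwich[OF uv(1) _ _ uv(2) g k, of "[a, b]" "[b, a]" \<tau>] ab by simp
  then show ?thesis using gmul_G[OF k g] by blast
qed

lemma span_basis:
  "\<forall>w g. length w = L \<longrightarrow> set w \<subseteq> {1..n} \<longrightarrow> g \<in> G \<longrightarrow> (\<exists>s\<in>SS. (\<lambda>x. Bs w g x - s x) \<in> Hid)"
proof (induction L rule: less_induct)
  case (less L)
  have "\<forall>w g. length w = L \<longrightarrow> nu w = N \<longrightarrow> set w \<subseteq> {1..n} \<longrightarrow> g \<in> G \<longrightarrow> (\<exists>s\<in>SS. (\<lambda>x. Bs w g x - s x) \<in> Hid)" for N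
  proof (induction N rule: less_induct)
    case (less N)
    show ?case
    proof (intro allI impI)
      fix w g assume len: "length w = L" and nuw: "nu w = N" and ws: "set w \<subseteq> {1..n}" and g: "g \<in> G"
      show "\<exists>s\<in>SS. (\<lambda>x. Bs w g x - s x) \<in> Hid"
      proof (cases "sorted w")
        case True
        then show ?thesis using SS_Bs[OF True ws g] Hid_zero by (intro bexI[of _ "Bs w g"]) auto
      next
        case False
        then obtain u a b v where wd: "w = u @ [a, b] @ v" and ba: "b < a" using unsorted by blast
        obtain \<kappa> g2 where g2: "g2 \<in> G" and D: "(\<lambda>x. Bs (u @ [a, b] @ v) g x - Bs (u @ [b, a] @ v) g x - \<kappa> * Bs (u @ v) g2 x) \<in> Hid"
          using swap_step[of u a b v g] ws wd g ba by blast
        have "nu (u @ [b, a] @ v) < N" using nu_swap[OF ba, of u v] nuw wd by simp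
        moreover have "length (u @ [b, a] @ v) = L" "set (u @ [b, a] @ v) \<subseteq> {1..n}" using len ws wd by auto
        ultimately obtain s1 where s1: "s1 \<in> SS" "(\<lambda>x. Bs (u @ [b, a] @ v) g x - s1 x) \<in> Hid"
          using less.IH g by blast
        have "length (u @ v) < L" "set (u @ v) \<subseteq> {1..n}" using len ws wd by auto
        then obtain s2 where s2: "s2 \<in> SS" "(\<lambda>x. Bs (u @ v) g2 x - s2 x) \<in> Hid"
          using \<open>\<And>y. y < L \<Longrightarrow> _\<close> g2 by blast
        let ?s = "\<lambda>x. 1 * s1 x + \<kappa> * s2 x"
        have S: "?s \<in> SS" using SS_lin s1 s2 by blast
        have E: "(\<lambda>x. Bs w g x - ?s x) = (\<lambda>x. (\<lambda>x. Bs (u @ [a, b] @ v) g x - Bs (u @ [b, a] @ v) g x - \<kappa> * Bs (u @ v) g2 x) x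
              + ((\<lambda>x. Bs (u @ [b, a] @ v) g x - s1 x) x + (\<lambda>x. \<kappa> * (\<lambda>x. Bs (u @ v) g2 x - s2 x) x) x))"
          unfolding wd by (auto simp: algebra_simps)
        have H: "(\<lambda>x. (\<lambda>x. Bs (u @ [a, b] @ v) g x - Bs (u @ [b, a] @ v) g x - \<kappa> * Bs (u @ v) g2 x) x
              + ((\<lambda>x. Bs (u @ [b, a] @ v) g x - s1 x) x + (\<lambda>x. \<kappa> * (\<lambda>x. Bs (u @ v) g2 x - s2 x) x) x)) \<in> Hid"
          by (intro Hid_add Hid_scale D s1 s2)
        have "(\<lambda>x. Bs w g x - ?s x) \<in> Hid" unfolding E by (rule H)
        from this S show ?thesis by (rule bexI)
      qed
    qed
  qed
  then show ?case by blast
qed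

lemma span_fin: "finite S \<Longrightarrow> \<forall>a. a \<in> SA \<longrightarrow> supp a \<subseteq> S \<longrightarrow> (\<exists>s\<in>SS. (\<lambda>x. a x - s x) \<in> Hid)"
proof (induction S rule: finite_induct)
  case empty
  show ?case
  proof (intro allI impI)
    fix a assume "a \<in> SA" "supp a \<subseteq> {}"
    then have "a = (\<lambda>_. 0)" by (auto simp: supp_def)
    then show "\<exists>s\<in>SS. (\<lambda>x. a x - s x) \<in> Hid" using SS_zero Hid_zero by (intro bexI[of _ "\<lambda>_. 0"]) auto
  qed
next
  case (insert b S)
  show ?case
  proof (intro allI impI)
    fix a assume a: "a \<in> SA" "supp a \<subseteq> insert b S"
    let ?a' = "a(b := 0)"
    have a': "?a' \<in> SA" "supp ?a' \<subseteq> S" using a by (auto simp: SA_iff supp_def intro: finite_subset)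
    obtain s' where s': "s' \<in> SS" "(\<lambda>x. ?a' x - s' x) \<in> Hid" using insert.IH a' by blast
    show "\<exists>s\<in>SS. (\<lambda>x. a x - s x) \<in> Hid"
    proof (cases "a b = 0")
      case True
      then have "?a' = a" by auto
      then show ?thesis using s' by auto
    next
      case False
      then have "b \<in> Sbasis n l" using a by (auto simp: SA_iff supp_def)
      then obtain w g where b: "b = (w, g)" "set w \<subseteq> {1..n}" "g \<in> G" by (cases b) (auto simp: Sbasis_iff)
      obtain sb where sb: "sb \<in> SS" "(\<lambda>x. Bs w g x - sb x) \<in> Hid" using span_basis b by blast
      let ?s = "\<lambda>x. 1 * s' x + a b * sb x"
      have S: "?s \<in> SS" using SS_lin s' sb by blast
      have E: "(\<lambda>x. a x - ?s x) = (\<lambda>x. (\<lambda>x. ?a' x - s' x) x + (\<lambda>x. a b * (\<lambda>x. Bs w g x - sb x) x) x)"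
        by (auto simp: b basis_el_def algebra_simps)
      have H: "(\<lambda>x. (\<lambda>x. ?a' x - s' x) x + (\<lambda>x. a b * (\<lambda>x. Bs w g x - sb x) x) x) \<in> Hid"
        by (intro Hid_add Hid_scale s' sb)
      have "(\<lambda>x. a x - ?s x) \<in> Hid" unfolding E by (rule H)
      from this S show ?thesis by (rule bexI)
    qed
  qed
qed

lemma span: "a \<in> SA \<Longrightarrow> \<exists>s\<in>SS. (\<lambda>x. a x - s x) \<in> Hid"
  using span_fin[of "supp a"] SA_fin by blast

lemma cnt_inj: "sorted w \<Longrightarrow> sorted w' \<Longrightarrow> cnt w = cnt w' \<Longrightarrow> w = w'"
proof -
  assume sw: "sorted w" "sorted w'" and c: "cnt w = cnt w'"
  have "mset w = mset w'"
    by (rule multiset_eqI) (use c in \<open>auto simp: cnt_def fun_eq_iff\<close>)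
  then have "sort w' = w" by (rule properties_for_sort[OF _ sw(1)])
  then show "w = w'" using sorted_sort_id[OF sw(2)] by simp
qed

lemma indep: assumes s: "s \<in> SS" and th: "Th s = (\<lambda>_. 0)" shows "s = (\<lambda>_. 0)"
proof (rule ccontr)
  assume "s \<noteq> (\<lambda>_. 0)"
  then have ne: "supp s \<noteq> {}" by (auto simp: supp_def)
  have fs: "finite (supp s)" using s SA_fin by (auto simp: SS_def)
  have sb: "supp s \<subseteq> Sbasis n l" using s by (auto simp: SS_def SA_iff)
  let ?M = "Max ((\<lambda>b. length (fst b)) ` supp s)"
  have "?M \<in> (\<lambda>b. length (fst b)) ` supp s" using Max_in[of "(\<lambda>b. length (fst b)) ` supp s"] fs ne by blast
  then obtain b0 where b0: "b0 \<in> supp s" "length (fst b0) = ?M" by (metis (no_types, lifting) imageE)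
  obtain w0 g0 where b0': "b0 = (w0, g0)" by fastforce
  have "(w0, g0) \<in> Sbasis n l" using sb b0 b0' by auto
  then have w0: "set w0 \<subseteq> {1..n}" by (simp add: Sbasis_iff)
  have sw0: "sorted w0" using s b0 b0' by (auto simp: SS_def supp_def)
  have dM: "deg (cnt w0) = int ?M" using deg_cnt[OF w0] b0 b0' by simp
  have trm: "s b * Tb b (cnt w0, g0) = (if b = b0 then s b0 else 0)" if b: "b \<in> supp s" for b
  proof -
    obtain w g where bw: "b = (w, g)" by fastforce
    have bS: "(w, g) \<in> Sbasis n l" using sb b bw by auto
    have sw: "sorted w" using s b bw by (auto simp: SS_def supp_def)
    have "length (fst b) \<in> (\<lambda>b. length (fst b)) ` supp s" using b by blast
    then have le: "length w \<le> ?M" using Max_ge[of "(\<lambda>b. length (fst b)) ` supp s"] fs bw by simp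
    show ?thesis
    proof (cases "length w = ?M")
      case False
      then have "length w < ?M" using le by simp
      have "\<not> deg (cnt w0) \<le> int (length w)" using dM \<open>length w < ?M\<close> by simp
      then have "Tb (w, g) (cnt w0, g0) = 0" using Tb_nz[OF bS, of "cnt w0" g0] by blast
      then have "Tb b (cnt w0, g0) = 0" using bw by simp
      moreover have "b \<noteq> b0" using False b0 bw by auto
      ultimately show ?thesis by simp
    next
      case True
      then have "Tb b (cnt w0, g0) = (if cnt w0 = cnt w \<and> g0 = g then 1 else 0)"
        using Tb_top[OF bS, of "cnt w0" g0] dM bw by simp
      moreover have "cnt w0 = cnt w \<and> g0 = g \<longleftrightarrow> b = b0"
        using cnt_inj[OF sw0 sw] bw b0' by auto
      ultimately show ?thesis by auto
    qed
  qed
  have "Th s (cnt w0, g0) = (\<Sum>b\<in>supp s. s b * Tb b (cnt w0, g0))" by (simp add: Th_def)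
  also have "\<dots> = (\<Sum>b\<in>supp s. if b = b0 then s b0 else 0)" by (rule sum.cong[OF refl]) (rule trm)
  also have "\<dots> = s b0" using fs b0 by simp
  finally have "Th s (cnt w0, g0) = s b0" .
  moreover have "s b0 \<noteq> 0" using b0 by (simp add: supp_def)
  ultimately show False using th by simp
qed

lemma ker: assumes a: "a \<in> SA" and th: "Th a = (\<lambda>_. 0)" shows "a \<in> Hid"
proof -
  obtain s where s: "s \<in> SS" "(\<lambda>x. a x - s x) \<in> Hid" using span[OF a] by blast
  have sA: "s \<in> SA" using s by (simp add: SS_def)
  have "Th (\<lambda>x. a x - s x) = (\<lambda>_. 0)" using Hid_ker[OF s(2)] by blast
  then have eq: "(\<lambda>y. Th a y - Th s y) = (\<lambda>_. 0)" unfolding Th_diff[OF SA_fin[OF a] SA_fin[OF sA]] .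
  have "Th s = (\<lambda>_. 0)"
  proof
    fix y
    have "Th a y - Th s y = 0" using fun_cong[OF eq, of y] by simp
    moreover have "Th a y = 0" using fun_cong[OF th, of y] by simp
    ultimately show "Th s y = 0" by simp
  qed
  then have "s = (\<lambda>_. 0)" using indep[OF s(1)] by blast
  then show ?thesis using s(2) by simp
qed
end



theorem proposition1p1:
  fixes n l :: nat and \<zeta> :: complex and t :: "nat \<Rightarrow> complex"
  assumes "n \<ge> 3" and "l \<ge> 2"
    and "\<zeta> ^ l = 1" and "\<forall>k. 0 < k \<and> k < l \<longrightarrow> \<zeta> ^ k \<noteq> 1"
  shows "\<exists>\<Theta>. (\<forall>a\<in>Salg n l. \<Theta> a \<in> Talg n l)
    \<and> (\<forall>a\<in>Salg n l. \<forall>b\<in>Salg n l. \<Theta> (\<lambda>x. a x + b x) = (\<lambda>y. \<Theta> a y + \<Theta> b y))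
    \<and> (\<forall>c. \<forall>a\<in>Salg n l. \<Theta> (\<lambda>x. c * a x) = (\<lambda>y. c * \<Theta> a y))
    \<and> (\<forall>a\<in>Salg n l. \<forall>b\<in>Salg n l. \<Theta> (smul n l \<zeta> a b) = tmul n l \<zeta> (\<Theta> a) (\<Theta> b))
    \<and> \<Theta> sone = tone
    \<and> (\<forall>a\<in>Salg n l. \<Theta> a = (\<lambda>_. 0) \<longleftrightarrow> a \<in> Hideal n l \<zeta> t)
    \<and> (\<forall>i\<in>{1..n}.
         \<Theta> (sx i) = fdiff (ty i)
                      (\<lambda>y. (\<zeta> * t i / (\<zeta> - 1)) * tmul n l \<zeta> (tyinv (succ_idx n i)) (tg (gen n \<zeta> i)) y)
       \<and> \<Theta> (sg (gen n \<zeta> i)) = tg (gen n \<zeta> i))"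
proof -
  interpret PT n l \<zeta> t
    by unfold_locales (use assms in auto)
  have sone_eq: "sone = Bs [] gone" by (simp add: sone_def)
  have Tb_nil: "Tb ([], g) = tg g" if "g \<in> G" for g
    using that by (simp add: Tb_def TM_one_left tg_TA)
  show ?thesis
  proof (intro exI[of _ Th] conjI ballI allI)
    fix a assume "a \<in> Salg n l" then show "Th a \<in> Talg n l" by (rule Th_TA)
  next
    fix a b assume "a \<in> Salg n l" "b \<in> Salg n l"
    then show "Th (\<lambda>x. a x + b x) = (\<lambda>y. Th a y + Th b y)"
      using Th_lin[of a b 1 1] SA_fin by simp
  next
    fix c a assume "a \<in> Salg n l"
    then show "Th (\<lambda>x. c * a x) = (\<lambda>y. c * Th a y)" using Th_scale SA_fin by blast
  next
    fix a b assume "a \<in> Salg n l" "b \<in> Salg n l"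
    then show "Th (smul n l \<zeta> a b) = tmul n l \<zeta> (Th a) (Th b)" by (rule Th_mult)
  next
    show "Th sone = tone" unfolding sone_eq Th_basis using Tb_nil[OF gone_G] tg_one by simp
  next
    fix a assume a: "a \<in> Salg n l"
    show "(Th a = (\<lambda>_. 0)) = (a \<in> Hideal n l \<zeta> t)"
      using ker[OF a] Hid_ker by blast
  next
    fix i :: nat assume i: "i \<in> {1..n}"
    have "Th (sx i) = Tx i"
      unfolding sx_def Th_basis Tb_def fst_conv snd_conv tg_one
      by (simp add: TM_one_right Tx_TA[OF i] TM_closed tone_TA)
    then show "Th (sx i) = fdiff (ty i) (\<lambda>y. \<zeta> * t i / (\<zeta> - 1) * tmul n l \<zeta> (tyinv (succ_idx n i)) (tg (gen n \<zeta> i)) y)"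
      by (simp add: Tx_def)
  next
    fix i :: nat assume i: "i \<in> {1..n}"
    show "Th (sg (gen n \<zeta> i)) = tg (gen n \<zeta> i)"
      unfolding sg_def Th_basis using Tb_nil[OF gen_G[OF i]] .
  qed
qed


end
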